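(* For any $\alpha>0$ and any $\varepsilon\in(0,1)$ there exists $C_{\alpha,\varepsilon}>0$ such that for all $N\ge2$, $$T_{N,\alpha}(1-\varepsilon)\ge\frac{N^2}{\pi^2}\big(\log N-C_{\alpha,\varepsilon}\big).$$
   Context: $\Omega_N=\{x\in\mathbb{R}^{N-1}:0\le x_1\le\dots\le x_{N-1}\le N\}$ with $x_0=0,x_N=N$; $\rho_\alpha(u)=\frac{\Gamma(2\alpha)}{\Gamma(\alpha)^2}[u(1-u)]^{\alpha-1}$; $\pi_{N,\alpha}$ is the probability on $\Omega_N$ with density proportional to $\prod_{i=1}^N(x_i-x_{i-1})^{\alpha-1}$. The Markov chain has generator $(\mathcal{L}_{N,\alpha}f)(x)=\sum_{i=1}^{N-1}\int_0^1(f(x^{(i,u)})-f(x))\rho_\alpha(u)du$, $x^{(i,u)}_j=x_j$ ($j\ne i$), $x^{(i,u)}_i=ux_{i-1}+(1-u)x_{i+1}$; $P^x_t$ is its law at time $t$ from $x$; $T_{N,\alpha}(\varepsilon)=\inf\{t\ge0:\sup_{x\in\Omega_N}\|P^x_t-\pi_{N,\alpha}\|_{TV}<\varepsilon\}$. *)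

theory Defs
  imports "HOL-Probability.Probability"
begin

text \<open>State space: configurations are functions on the index set {1..<N}
  (extensional, as elements of the product measurable space), i.e. points of R^(N-1).\<close>

definition state_space :: "nat \<Rightarrow> (nat \<Rightarrow> real) measure" where
  "state_space N = (\<Pi>\<^sub>M i\<in>{1..<N}. lborel)"

definition xb :: "nat \<Rightarrow> (nat \<Rightarrow> real) \<Rightarrow> nat \<Rightarrow> real" where
  "xb N x i = (if i = 0 then 0 else if i = N then real N else x i)"

definition Omega :: "nat \<Rightarrow> (nat \<Rightarrow> real) set" where
  "Omega N = {x \<in> space (state_space N). \<forall>i\<in>{1..N}. xb N x (i - 1) \<le> xb N x i}"

definition rho :: "real \<Rightarrow> real \<Rightarrow> real" where
  "rho \<alpha> u = Gamma (2 * \<alpha>) / (Gamma \<alpha>)\<^sup>2 * (u * (1 - u)) powr (\<alpha> - 1)"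

definition beta_measure :: "real \<Rightarrow> real measure" where
  "beta_measure \<alpha> = density lborel (\<lambda>u. ennreal (indicator {0<..<1} u * rho \<alpha> u))"

definition pi_weight :: "nat \<Rightarrow> real \<Rightarrow> (nat \<Rightarrow> real) \<Rightarrow> ennreal" where
  "pi_weight N \<alpha> x = ennreal (indicator (Omega N) x *
      (\<Prod>i\<in>{1..N}. (xb N x i - xb N x (i - 1)) powr (\<alpha> - 1)))"

definition pi_measure :: "nat \<Rightarrow> real \<Rightarrow> (nat \<Rightarrow> real) measure" where
  "pi_measure N \<alpha> = density (state_space N)
      (\<lambda>x. pi_weight N \<alpha> x / (\<integral>\<^sup>+ y. pi_weight N \<alpha> y \<partial>state_space N))"

definition resample :: "nat \<Rightarrow> (nat \<Rightarrow> real) \<Rightarrow> nat \<Rightarrow> real \<Rightarrow> nat \<Rightarrow> real" where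
  "resample N x i u = x(i := u * xb N x (i - 1) + (1 - u) * xb N x (i + 1))"

text \<open>Jump kernel of the chain: the generator is L = (N-1)(K - I) with K below
  (choose i uniformly in {1..N-1}, then u ~ rho_alpha).\<close>
definition jump_kernel :: "nat \<Rightarrow> real \<Rightarrow> (nat \<Rightarrow> real) \<Rightarrow> (nat \<Rightarrow> real) measure" where
  "jump_kernel N \<alpha> x = uniform_count_measure {1..<N} \<bind>
      (\<lambda>i. distr (beta_measure \<alpha>) (state_space N) (\<lambda>u. resample N x i u))"

fun kernel_pow :: "nat \<Rightarrow> real \<Rightarrow> nat \<Rightarrow> (nat \<Rightarrow> real) \<Rightarrow> (nat \<Rightarrow> real) measure" where
  "kernel_pow N \<alpha> 0 x = return (state_space N) x"
| "kernel_pow N \<alpha> (Suc k) x = kernel_pow N \<alpha> k x \<bind> jump_kernel N \<alpha>"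

text \<open>Law at time t started from x: P_t = exp(tL) = sum_k e^{-(N-1)t} ((N-1)t)^k/k! K^k.\<close>
definition law_at :: "nat \<Rightarrow> real \<Rightarrow> real \<Rightarrow> (nat \<Rightarrow> real) \<Rightarrow> (nat \<Rightarrow> real) measure" where
  "law_at N \<alpha> t x = density (count_space UNIV)
      (\<lambda>k::nat. ennreal (exp (- (real (N - 1) * t)) * (real (N - 1) * t) ^ k / fact k))
      \<bind> (\<lambda>k. kernel_pow N \<alpha> k x)"

definition tv_dist :: "'a measure \<Rightarrow> 'a measure \<Rightarrow> real" where
  "tv_dist M M' = (SUP A\<in>sets M. \<bar>measure M A - measure M' A\<bar>)"

text \<open>Mixing time (as an extended real; +infinity if the set is empty).\<close>
definition mixing_time :: "nat \<Rightarrow> real \<Rightarrow> real \<Rightarrow> ereal" where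
  "mixing_time N \<alpha> \<epsilon> = Inf (ereal ` {t. t \<ge> 0 \<and>
      (SUP x\<in>Omega N. tv_dist (law_at N \<alpha> t x) (pi_measure N \<alpha>)) < \<epsilon>})"

end

theory Submission
  imports Defs
begin

section \<open>Beta distribution\<close>

lemma rho_nonneg: "0 < a \<Longrightarrow> 0 \<le> rho a u"
  unfolding rho_def by (intro mult_nonneg_nonneg divide_nonneg_nonneg) (auto intro: less_imp_le Gamma_real_pos)

lemma rho_measurable[measurable]: "rho a \<in> borel_measurable borel"
  unfolding rho_def by measurable

lemma beta_nn_moment:
  assumes a: "0 < a"
  shows "(\<integral>\<^sup>+u. ennreal (indicator {0<..<1} u * rho a u * u ^ n) \<partial>lborel)
        = ennreal (Gamma (2*a) / (Gamma a)\<^sup>2 * Beta (a + real n) a)"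
proof -
  define c where "c = Gamma (2*a) / (Gamma a)\<^sup>2"
  have c: "0 \<le> c" unfolding c_def using a by (auto intro: less_imp_le Gamma_real_pos)
  have "((\<lambda>t. t powr (a + real n - 1) * (1 - t) powr (a - 1)) has_integral Beta (a + real n) a) {0<..<1}"
    using has_integral_Beta_real[of "a + real n" a] a by (simp add: has_integral_Icc_iff_Ioo)
  then have "((\<lambda>t. c * (t powr (a + real n - 1) * (1 - t) powr (a - 1))) has_integral c * Beta (a + real n) a) {0<..<1}"
    by (rule has_integral_mult_right)
  moreover have "c * (t powr (a + real n - 1) * (1 - t) powr (a - 1)) = rho a t * t ^ n" if "t \<in> {0<..<1}" for t
  proof -
    from that have t: "0 < t" "t < 1" by auto
    have "t powr (a + real n - 1) = t powr (a - 1) * t ^ n"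
      using t by (simp add: powr_add[symmetric] powr_realpow[symmetric] algebra_simps)
    moreover have "(t * (1 - t)) powr (a - 1) = t powr (a - 1) * (1 - t) powr (a - 1)"
      by (rule powr_mult)
    ultimately show ?thesis using t unfolding rho_def c_def by (simp only:) (simp add: algebra_simps)
  qed
  ultimately have "((\<lambda>t. rho a t * t ^ n) has_integral c * Beta (a + real n) a) {0<..<1}"
    using has_integral_spike_finite_eq[of "{}"] by (smt (verit, ccfv_SIG) has_integral_eq)
  then have "(\<integral>\<^sup>+ x. ennreal (indicator {0<..<1} x * (rho a x * x ^ n)) \<partial>lborel) = ennreal (c * Beta (a + real n) a)"
    by (intro nn_integral_has_integral_lebesgue) (auto intro!: mult_nonneg_nonneg rho_nonneg a)
  then show ?thesis by (simp add: c_def mult.assoc)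
qed

lemma Beta_sym_vals:
  fixes a :: real
  assumes a: "0 < a"
  shows "Gamma (2*a) / (Gamma a)\<^sup>2 * Beta a a = 1"
    and "Gamma (2*a) / (Gamma a)\<^sup>2 * Beta (a + 1) a = 1/2"
    and "Gamma (2*a) / (Gamma a)\<^sup>2 * Beta (a + 2) a = (a + 1) / (2 * (2*a + 1))"
proof -
  have g: "Gamma a > 0" "Gamma (2*a) > 0" using a by (auto intro: Gamma_real_pos)
  have g': "Gamma a \<noteq> 0" "Gamma (a*2) \<noteq> 0" "Gamma (2*a) \<noteq> 0" using g by (auto simp: mult.commute)
  have np: "x \<notin> \<int>\<^sub>\<le>\<^sub>0" if "x > 0" for x :: real using that by (auto elim!: nonpos_Ints_cases)
  have G1: "Gamma (a + 1) = a * Gamma a" using Gamma_plus1[OF np[OF a]] .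
  have G2: "Gamma (a + 2) = (a + 1) * a * Gamma a"
  proof -
    have "Gamma ((a + 1) + 1) = (a + 1) * Gamma (a + 1)" using a by (intro Gamma_plus1 np) simp
    moreover have "(a + 1) + 1 = a + 2" by simp
    ultimately show ?thesis using G1 by simp
  qed
  have H1: "Gamma (2*a + 1) = 2*a * Gamma (2*a)" using Gamma_plus1[OF np[of "2*a"]] a by simp
  have H2: "Gamma (2*a + 2) = (2*a+1) * (2*a) * Gamma (2*a)"
  proof -
    have "Gamma ((2*a + 1) + 1) = (2*a + 1) * Gamma (2*a + 1)" using a by (intro Gamma_plus1 np) simp
    moreover have "(2*a + 1) + 1 = 2*a + 2" by simp
    ultimately show ?thesis using H1 by simp
  qed
  show "Gamma (2*a) / (Gamma a)\<^sup>2 * Beta a a = 1"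
    using g g' unfolding Beta_def by (simp add: power2_eq_square field_simps mult_2)
  have B1: "Beta (a + 1) a = Gamma (a + 1) * Gamma a / Gamma (2*a + 1)"
    unfolding Beta_def by (simp add: algebra_simps mult_2)
  have B2: "Beta (a + 2) a = Gamma (a + 2) * Gamma a / Gamma (2*a + 2)"
    unfolding Beta_def by (simp add: algebra_simps mult_2)
  show "Gamma (2*a) / (Gamma a)\<^sup>2 * Beta (a + 1) a = 1/2"
    unfolding B1 G1 H1 using g g' a by (simp add: power2_eq_square field_simps)
  show "Gamma (2*a) / (Gamma a)\<^sup>2 * Beta (a + 2) a = (a + 1) / (2 * (2*a + 1))"
  proof -
    have nz: "2*a+1 \<noteq> 0" "a \<noteq> 0" "a*2+1 \<noteq> 0" using a by auto
    show ?thesis unfolding B2 G2 H2 using g g' nz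
      by (simp add: power2_eq_square divide_simps)
  qed
qed

lemma beta_measure_alt: "beta_measure a = density lborel (\<lambda>u. ennreal (indicator {0<..<1} u * rho a u))"
  by (simp add: beta_measure_def)

lemma prob_space_beta: assumes a: "0 < a" shows "prob_space (beta_measure a)"
proof
  have "emeasure (beta_measure a) (space (beta_measure a))
      = (\<integral>\<^sup>+u. ennreal (indicator {0<..<1} u * rho a u * u ^ 0) \<partial>lborel)"
    unfolding beta_measure_def by (simp add: emeasure_density)
  also have "\<dots> = 1" using beta_nn_moment[OF a, of 0] Beta_sym_vals(1)[OF a] by (simp only: of_nat_0 add_0_right ennreal_1)
  finally show "emeasure (beta_measure a) (space (beta_measure a)) = 1" .
qed

lemma sets_beta[measurable_cong, simp]: "sets (beta_measure a) = sets borel"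
  by (simp add: beta_measure_def)

lemma space_beta[simp]: "space (beta_measure a) = UNIV"
  by (simp add: beta_measure_def)

lemma AE_beta: "AE u in beta_measure a. 0 < u \<and> u < 1"
  unfolding beta_measure_def
  by (subst AE_density) (auto split: split_indicator)

lemma beta_integrable_pow: assumes a: "0 < a" shows "integrable (beta_measure a) (\<lambda>u. u ^ n)"
proof -
  interpret prob_space "beta_measure a" by (rule prob_space_beta[OF a])
  show ?thesis
  proof (rule integrable_const_bound[where B=1])
    show "AE x in beta_measure a. norm (x ^ n) \<le> 1"
      using AE_beta by eventually_elim (auto simp: power_abs intro: power_le_one)
  qed simp
qed

lemma beta_integral_pow:
  assumes a: "0 < a"
  shows "(\<integral>u. u ^ n \<partial>beta_measure a) = Gamma (2*a) / (Gamma a)\<^sup>2 * Beta (a + real n) a"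
proof -
  have "(\<integral>u. u ^ n \<partial>beta_measure a) = (\<integral>u. (indicator {0<..<1} u * rho a u) * u ^ n \<partial>lborel)"
    unfolding beta_measure_def
    by (subst integral_density) (auto intro!: mult_nonneg_nonneg rho_nonneg a)
  also have "\<dots> = enn2real (\<integral>\<^sup>+u. ennreal (indicator {0<..<1} u * rho a u * u ^ n) \<partial>lborel)"
    by (rule integral_eq_nn_integral) (auto intro!: AE_I2 mult_nonneg_nonneg rho_nonneg a split: split_indicator)
  also have "\<dots> = Gamma (2*a) / (Gamma a)\<^sup>2 * Beta (a + real n) a"
    unfolding beta_nn_moment[OF a]
    by (rule enn2real_ennreal) (use a in \<open>auto intro!: mult_nonneg_nonneg divide_nonneg_nonneg less_imp_le[OF Gamma_real_pos] simp: Beta_def\<close>)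
  finally show ?thesis .
qed

lemma beta_E1: "0 < a \<Longrightarrow> (\<integral>u. u \<partial>beta_measure a) = 1/2"
  using beta_integral_pow[of a 1] Beta_sym_vals(2)[of a] by (simp only: of_nat_1 power_one_right)

lemma beta_E2: "0 < a \<Longrightarrow> (\<integral>u. u^2 \<partial>beta_measure a) = (a + 1) / (2 * (2*a + 1))"
  using beta_integral_pow[of a 2] Beta_sym_vals(3)[of a] by (simp only: of_nat_numeral)

lemma beta_poly:
  assumes a: "0 < a"
  shows "(\<integral>u. c0 + c1 * u + c2 * u^2 \<partial>beta_measure a) = c0 + c1 / 2 + c2 * ((a + 1) / (2 * (2*a + 1)))"
proof -
  interpret prob_space "beta_measure a" by (rule prob_space_beta[OF a])
  have i1: "integrable (beta_measure a) (\<lambda>u. u)" using beta_integrable_pow[OF a, of 1] by simp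
  have i2: "integrable (beta_measure a) (\<lambda>u. u^2)" using beta_integrable_pow[OF a, of 2] by simp
  have "(\<integral>u. c0 + c1 * u + c2 * u^2 \<partial>beta_measure a) = (\<integral>u. c0 + c1 * u \<partial>beta_measure a) + (\<integral>u. c2 * u^2 \<partial>beta_measure a)"
    using i1 i2 by (intro Bochner_Integration.integral_add) auto
  also have "(\<integral>u. c0 + c1 * u \<partial>beta_measure a) = c0 + c1 * (\<integral>u. u \<partial>beta_measure a)"
    using i1 by (subst Bochner_Integration.integral_add) (auto simp: prob_space[simplified])
  finally show ?thesis using beta_E1[OF a] beta_E2[OF a] by (simp add: prob_space[simplified])
qed

section \<open>State space, Omega, resampling\<close>

lemma space_SS: "space (state_space N) = (\<Pi>\<^sub>E i\<in>{1..<N}. UNIV)"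
  by (simp add: state_space_def space_PiM)

lemma xb_0[simp]: "xb N x 0 = 0" and xb_N[simp]: "xb N x N = real N"
  by (auto simp: xb_def)

lemma xb_measurable[measurable]: "(\<lambda>x. xb N x m) \<in> borel_measurable (state_space N)"
proof (cases "m = 0 \<or> m = N")
  case True then show ?thesis by (elim disjE) simp_all
next
  case False
  show ?thesis
  proof (cases "m < N")
    case True
    with False have "m \<in> {1..<N}" by auto
    then have "(\<lambda>x. x m) \<in> borel_measurable (state_space N)"
      unfolding state_space_def by measurable
    then show ?thesis using False by (simp add: xb_def)
  next
    case F2: False
    have "(\<lambda>x. xb N x m) \<in> borel_measurable (state_space N) \<longleftrightarrow> (\<lambda>x. undefined::real) \<in> borel_measurable (state_space N)"
      by (rule measurable_cong) (use False F2 in \<open>auto simp: xb_def space_SS PiE_def extensional_def\<close>)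
    then show ?thesis by simp
  qed
qed

lemma Omega_sets[measurable]: "Omega N \<in> sets (state_space N)"
  unfolding Omega_def
  by (rule sets.sets_Collect_finite_All) (auto intro: borel_measurable_le)

lemma Omega_space: "x \<in> Omega N \<Longrightarrow> x \<in> space (state_space N)"
  by (simp add: Omega_def)

lemma Omega_mono:
  assumes "x \<in> Omega N" "j \<le> k" "k \<le> N"
  shows "xb N x j \<le> xb N x k"
  using assms(2,3)
proof (induction k)
  case 0 then show ?case by simp
next
  case (Suc k)
  show ?case
  proof (cases "j = Suc k")
    case True then show ?thesis by simp
  next
    case False
    then have "xb N x j \<le> xb N x k" using Suc by auto
    also have "xb N x k \<le> xb N x (Suc k)" using assms(1) Suc.prems unfolding Omega_def by force
    finally show ?thesis .
  qed
qed

lemma Omega_bounds: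
  assumes "x \<in> Omega N" "j \<le> N"
  shows "0 \<le> xb N x j" "xb N x j \<le> real N"
  using Omega_mono[OF assms(1), of 0 j] Omega_mono[OF assms(1), of j N] assms by auto

lemma xb_resample:
  assumes "i \<in> {1..<N}"
  shows "xb N (resample N x i u) m = (if m = i then u * xb N x (i-1) + (1-u) * xb N x (i+1) else xb N x m)"
  using assms by (auto simp: xb_def resample_def)

lemma resample_space:
  assumes "x \<in> space (state_space N)" "i \<in> {1..<N}"
  shows "resample N x i u \<in> space (state_space N)"
  using assms by (auto simp: space_SS resample_def PiE_def extensional_def)

lemma resample_Omega:
  assumes x: "x \<in> Omega N" and i: "i \<in> {1..<N}" and u: "0 \<le> u" "u \<le> 1"
  shows "resample N x i u \<in> Omega N"
proof -
  have a: "xb N x (i-1) \<le> xb N x i" "xb N x i \<le> xb N x (i+1)"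
    using Omega_mono[OF x] i by auto
  have v1: "xb N x (i-1) \<le> u * xb N x (i-1) + (1-u) * xb N x (i+1)"
  proof -
    have "(1-u) * xb N x (i-1) \<le> (1-u) * xb N x (i+1)" using a u by (intro mult_left_mono) auto
    then show ?thesis by (simp add: algebra_simps)
  qed
  have v2: "u * xb N x (i-1) + (1-u) * xb N x (i+1) \<le> xb N x (i+1)"
  proof -
    have "u * xb N x (i-1) \<le> u * xb N x (i+1)" using a u by (intro mult_left_mono) auto
    then show ?thesis by (simp add: algebra_simps)
  qed
  show ?thesis
    unfolding Omega_def
  proof (intro CollectI conjI ballI)
    show "resample N x i u \<in> space (state_space N)" using resample_space[OF Omega_space[OF x] i] .
    fix j assume j: "j \<in> {1..N}"
    have xj: "xb N x (j-1) \<le> xb N x j" using x j unfolding Omega_def by auto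
    show "xb N (resample N x i u) (j - 1) \<le> xb N (resample N x i u) j"
      unfolding xb_resample[OF i] using j xj v1 v2 i by auto
  qed
qed

lemma resample_meas_fixed:
  assumes i: "i \<in> {1..<N}"
  shows "(\<lambda>(x, u). resample N x i u) \<in> state_space N \<Otimes>\<^sub>M borel \<rightarrow>\<^sub>M state_space N"
proof -
  have "(\<lambda>p. (\<lambda>j\<in>{1..<N}. resample N (fst p) i (snd p) j)) \<in> state_space N \<Otimes>\<^sub>M borel \<rightarrow>\<^sub>M (\<Pi>\<^sub>M j\<in>{1..<N}. lborel)"
  proof (rule measurable_restrict)
    fix j assume j: "j \<in> {1..<N}"
    show "(\<lambda>p. resample N (fst p) i (snd p) j) \<in> (state_space N \<Otimes>\<^sub>M borel) \<rightarrow>\<^sub>M lborel"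
      unfolding measurable_lborel2
    proof (cases "j = i")
      case True
      then show ?thesis unfolding resample_def fun_upd_apply by simp
    next
      case False
      have "(\<lambda>p. fst p j) \<in> borel_measurable (state_space N \<Otimes>\<^sub>M borel)"
        using j unfolding state_space_def by measurable
      then show ?thesis using False unfolding resample_def fun_upd_apply by simp
    qed
  qed
  moreover have "(\<lambda>j\<in>{1..<N}. resample N (fst p) i (snd p) j) = resample N (fst p) i (snd p)"
    if "p \<in> space (state_space N \<Otimes>\<^sub>M borel)" for p
  proof -
    have "fst p \<in> space (state_space N)" using that by (auto simp: space_pair_measure)
    from resample_space[OF this i] show ?thesis by (auto simp: space_SS PiE_def extensional_def)
  qed
  ultimately show ?thesis
    by (subst measurable_cong[where g="\<lambda>p. (\<lambda>j\<in>{1..<N}. resample N (fst p) i (snd p) j)"]) (auto simp: case_prod_beta state_space_def)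
qed

section \<open>The jump kernel\<close>

lemma resample_meas_joint:
  "(\<lambda>(p, u). resample N (fst p) (snd p) u) \<in> (state_space N \<Otimes>\<^sub>M count_space {1..<N}) \<Otimes>\<^sub>M beta_measure a \<rightarrow>\<^sub>M state_space N"
proof -
  have "(\<lambda>q. resample N (fst (fst q)) (snd (fst q)) (snd q)) \<in> (state_space N \<Otimes>\<^sub>M count_space {1..<N}) \<Otimes>\<^sub>M beta_measure a \<rightarrow>\<^sub>M state_space N"
  proof (rule measurable_compose_countable'[where I="{1..<N}"])
    fix i assume i: "i \<in> {1..<N}"
    have "(\<lambda>q. (fst (fst q), snd q)) \<in> (state_space N \<Otimes>\<^sub>M count_space {1..<N}) \<Otimes>\<^sub>M beta_measure a \<rightarrow>\<^sub>M state_space N \<Otimes>\<^sub>M borel"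
    proof (rule measurable_Pair)
      show "(\<lambda>x. fst (fst x)) \<in> (state_space N \<Otimes>\<^sub>M count_space {1..<N}) \<Otimes>\<^sub>M beta_measure a \<rightarrow>\<^sub>M state_space N"
        by measurable
      show "snd \<in> borel_measurable ((state_space N \<Otimes>\<^sub>M count_space {1..<N}) \<Otimes>\<^sub>M beta_measure a)"
        using measurable_snd[of "state_space N \<Otimes>\<^sub>M count_space {1..<N}" "beta_measure a"]
        by (simp add: measurable_cong_sets[OF refl sets_beta])
    qed
    from measurable_compose[OF this resample_meas_fixed[OF i]]
    show "(\<lambda>q. resample N (fst (fst q)) i (snd q)) \<in> (state_space N \<Otimes>\<^sub>M count_space {1..<N}) \<Otimes>\<^sub>M beta_measure a \<rightarrow>\<^sub>M state_space N"
      by simp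
  next
    show "(\<lambda>q. snd (fst q)) \<in> (state_space N \<Otimes>\<^sub>M count_space {1..<N}) \<Otimes>\<^sub>M beta_measure a \<rightarrow>\<^sub>M count_space {1..<N}"
      by measurable
  qed simp
  then show ?thesis by (simp add: case_prod_beta)
qed

lemma in_space_prob_algebraI: "prob_space M \<Longrightarrow> sets M = sets N \<Longrightarrow> M \<in> space (prob_algebra N)"
  by (simp add: space_prob_algebra)

lemma jump_kernel_meas:
  assumes a: "0 < a" and N: "2 \<le> N"
  shows "jump_kernel N a \<in> state_space N \<rightarrow>\<^sub>M prob_algebra (state_space N)"
proof -
  have pb: "prob_space (beta_measure a)" by (rule prob_space_beta[OF a])
  have g: "(\<lambda>p. distr (beta_measure a) (state_space N) (resample N (fst p) (snd p)))
     \<in> state_space N \<Otimes>\<^sub>M count_space {1..<N} \<rightarrow>\<^sub>M prob_algebra (state_space N)"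
  proof (rule measurable_distr_prob_space2[where M="beta_measure a"])
    show "(\<lambda>x. beta_measure a) \<in> state_space N \<Otimes>\<^sub>M count_space {1..<N} \<rightarrow>\<^sub>M prob_algebra (beta_measure a)"
      by (rule measurable_const) (simp add: in_space_prob_algebraI pb)
    show "(\<lambda>(x, y). resample N (fst x) (snd x) y) \<in> (state_space N \<Otimes>\<^sub>M count_space {1..<N}) \<Otimes>\<^sub>M beta_measure a \<rightarrow>\<^sub>M state_space N"
      by (rule resample_meas_joint)
  qed
  have f: "(\<lambda>x. uniform_count_measure {1..<N}) \<in> state_space N \<rightarrow>\<^sub>M prob_algebra (count_space {1..<N})"
    by (rule measurable_const) (use N in \<open>auto intro!: in_space_prob_algebraI prob_space_uniform_count_measure simp: sets_uniform_count_measure\<close>)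
  have "(\<lambda>x. uniform_count_measure {1..<N} \<bind> (\<lambda>i. distr (beta_measure a) (state_space N) (resample N x i)))
     \<in> state_space N \<rightarrow>\<^sub>M prob_algebra (state_space N)"
    by (rule measurable_bind_prob_space2[OF f]) (use g in \<open>simp add: case_prod_beta\<close>)
  then show ?thesis unfolding jump_kernel_def[abs_def] .
qed

lemma bind_in_prob_algebra:
  assumes "A \<in> space (prob_algebra M)" "B \<in> M \<rightarrow>\<^sub>M prob_algebra L"
  shows "A \<bind> B \<in> space (prob_algebra L)"
  using measurable_bind_prob_space[OF measurable_const[OF assms(1), of "count_space UNIV"] assms(2), THEN measurable_space, of undefined]
  by simp

lemma kernel_pow_prob:
  assumes a: "0 < a" and N: "2 \<le> N" and x: "x \<in> space (state_space N)"
  shows "kernel_pow N a k x \<in> space (prob_algebra (state_space N))"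
proof (induction k)
  case 0
  show ?case using measurable_space[OF measurable_return_prob_space x] by simp
next
  case (Suc k)
  show ?case using bind_in_prob_algebra[OF Suc jump_kernel_meas[OF a N]] by simp
qed

lemma kernel_pow_facts:
  assumes a: "0 < a" and N: "2 \<le> N" and x: "x \<in> space (state_space N)"
  shows "prob_space (kernel_pow N a k x)" "sets (kernel_pow N a k x) = sets (state_space N)"
    "space (kernel_pow N a k x) = space (state_space N)"
proof -
  show p: "prob_space (kernel_pow N a k x)" and s: "sets (kernel_pow N a k x) = sets (state_space N)"
    using kernel_pow_prob[OF a N x, of k] by (auto simp: space_prob_algebra)
  show "space (kernel_pow N a k x) = space (state_space N)" using sets_eq_imp_space_eq[OF s] .
qed

lemma jump_kernel_facts:
  assumes a: "0 < a" and N: "2 \<le> N" and x: "x \<in> space (state_space N)"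
  shows "prob_space (jump_kernel N a x)" "sets (jump_kernel N a x) = sets (state_space N)"
  using measurable_space[OF jump_kernel_meas[OF a N] x] by (auto simp: space_prob_algebra)

lemma jump_kernel_meas_sub:
  assumes a: "0 < a" and N: "2 \<le> N" and "sets M = sets (state_space N)"
  shows "jump_kernel N a \<in> M \<rightarrow>\<^sub>M subprob_algebra (state_space N)"
  unfolding measurable_cong_sets[OF assms(3) refl]
  by (rule measurable_prob_algebraD[OF jump_kernel_meas[OF a N]])

lemma distr_resample_meas:
  assumes a: "0 < a" and x: "x \<in> space (state_space N)"
  shows "(\<lambda>i. distr (beta_measure a) (state_space N) (resample N x i)) \<in> uniform_count_measure {1..<N} \<rightarrow>\<^sub>M subprob_algebra (state_space N)"
    and "i \<in> {1..<N} \<Longrightarrow> resample N x i \<in> beta_measure a \<rightarrow>\<^sub>M state_space N"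
proof -
  have r: "resample N x i \<in> beta_measure a \<rightarrow>\<^sub>M state_space N" if i: "i \<in> {1..<N}" for i
  proof -
    have "(\<lambda>u. (x, u)) \<in> beta_measure a \<rightarrow>\<^sub>M state_space N \<Otimes>\<^sub>M borel"
      by (rule measurable_Pair[OF measurable_const[OF x] measurable_ident_sets[OF sets_beta]])
    from measurable_compose[OF this resample_meas_fixed[OF i]] show ?thesis by simp
  qed
  then show "i \<in> {1..<N} \<Longrightarrow> resample N x i \<in> beta_measure a \<rightarrow>\<^sub>M state_space N" .
  show "(\<lambda>i. distr (beta_measure a) (state_space N) (resample N x i)) \<in> uniform_count_measure {1..<N} \<rightarrow>\<^sub>M subprob_algebra (state_space N)"
    unfolding measurable_cong_sets[OF sets_uniform_count_measure_count_space refl] measurable_count_space_eq1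
    using r by (auto simp: space_subprob_algebra intro!: prob_space_imp_subprob_space prob_space.prob_space_distr[OF prob_space_beta[OF a]])
qed

lemma Omega_sets_Collect[simp]: "{y \<in> space (state_space N). y \<in> Omega N} \<in> sets (state_space N)"
proof -
  have "{y \<in> space (state_space N). y \<in> Omega N} = Omega N" using Omega_space by auto
  then show ?thesis by simp
qed

lemma jump_kernel_AE:
  assumes a: "0 < a" and N: "2 \<le> N" and x: "x \<in> Omega N"
  shows "AE y in jump_kernel N a x. y \<in> Omega N"
proof -
  have xs: "x \<in> space (state_space N)" using Omega_space[OF x] .
  have "AE i in uniform_count_measure {1..<N}. AE y in distr (beta_measure a) (state_space N) (resample N x i). y \<in> Omega N"
  proof (rule AE_I2)
    fix i assume "i \<in> space (uniform_count_measure {1..<N})"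
    then have i: "i \<in> {1..<N}" by (simp add: space_uniform_count_measure)
    have "AE u in beta_measure a. resample N x i u \<in> Omega N"
      using AE_beta[of a] by eventually_elim (auto intro!: resample_Omega[OF x i])
    then show "AE y in distr (beta_measure a) (state_space N) (resample N x i). y \<in> Omega N"
      by (subst AE_distr_iff[OF distr_resample_meas(2)[OF a xs i]]) (auto simp: Omega_sets_Collect)
  qed
  then show ?thesis
    unfolding jump_kernel_def by (subst AE_bind[OF distr_resample_meas(1)[OF a xs]]) auto
qed

lemma kernel_pow_AE:
  assumes a: "0 < a" and N: "2 \<le> N" and x: "x \<in> Omega N"
  shows "AE y in kernel_pow N a k x. y \<in> Omega N"
proof (induction k)
  case 0
  show ?case using x Omega_space[OF x] by (subst kernel_pow.simps, subst AE_return) auto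
next
  case (Suc k)
  have xs: "x \<in> space (state_space N)" using Omega_space[OF x] .
  have J: "jump_kernel N a \<in> kernel_pow N a k x \<rightarrow>\<^sub>M subprob_algebra (state_space N)"
    by (rule jump_kernel_meas_sub[OF a N kernel_pow_facts(2)[OF a N xs]])
  show ?case
    unfolding kernel_pow.simps
    by (subst AE_bind[OF J]) (use Suc jump_kernel_AE[OF a N] in \<open>auto elim!: eventually_mono\<close>)
qed

definition Tm :: "nat \<Rightarrow> real \<Rightarrow> ((nat \<Rightarrow> real) \<Rightarrow> real) \<Rightarrow> (nat \<Rightarrow> real) \<Rightarrow> nat \<Rightarrow> real" where
  "Tm N a f y i = (\<integral>u. f (resample N y i u) \<partial>beta_measure a)"

definition Kop :: "nat \<Rightarrow> real \<Rightarrow> ((nat \<Rightarrow> real) \<Rightarrow> real) \<Rightarrow> (nat \<Rightarrow> real) \<Rightarrow> real" where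
  "Kop N a f y = (\<Sum>i\<in>{1..<N}. Tm N a f y i) / real (N - 1)"

lemma integral_jump:
  fixes f :: "(nat \<Rightarrow> real) \<Rightarrow> real"
  assumes a: "0 < a" and N: "2 \<le> N" and y: "y \<in> space (state_space N)"
    and f[measurable]: "f \<in> borel_measurable (state_space N)" and B: "\<And>z. z \<in> space (state_space N) \<Longrightarrow> \<bar>f z\<bar> \<le> B"
  shows "(\<integral>z. f z \<partial>jump_kernel N a y) = Kop N a f y"
proof -
  have fin: "finite_measure (uniform_count_measure {1..<N})"
    using N by (intro prob_space_uniform_count_measure[THEN prob_space.axioms(1)]) auto
  have "(\<integral>z. f z \<partial>jump_kernel N a y) = (\<integral>i. (\<integral>z. f z \<partial>distr (beta_measure a) (state_space N) (resample N y i)) \<partial>uniform_count_measure {1..<N})"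
    unfolding jump_kernel_def
  proof (rule integral_bind[where K="state_space N" and B=B and B'=1])
    show "(\<lambda>i. distr (beta_measure a) (state_space N) (resample N y i)) \<in> uniform_count_measure {1..<N} \<rightarrow>\<^sub>M subprob_algebra (state_space N)"
      by (rule distr_resample_meas(1)[OF a y])
    show "AE i in uniform_count_measure {1..<N}. emeasure (distr (beta_measure a) (state_space N) (resample N y i)) (space (distr (beta_measure a) (state_space N) (resample N y i))) \<le> ennreal 1"
    proof (rule AE_I2)
      fix i assume "i \<in> space (uniform_count_measure {1..<N})"
      then have i: "i \<in> {1..<N}" by (simp add: space_uniform_count_measure)
      interpret prob_space "distr (beta_measure a) (state_space N) (resample N y i)"
        by (rule prob_space.prob_space_distr[OF prob_space_beta[OF a] distr_resample_meas(2)[OF a y i]])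
      show "emeasure (distr (beta_measure a) (state_space N) (resample N y i)) (space (distr (beta_measure a) (state_space N) (resample N y i))) \<le> ennreal 1"
        using emeasure_space_1 by simp
    qed
  qed (use f B fin in auto)
  also have "\<dots> = (\<Sum>i\<in>{1..<N}. (\<integral>z. f z \<partial>distr (beta_measure a) (state_space N) (resample N y i))) / card {1..<N}"
    by (rule integral_uniform_count_measure) simp
  also have "\<dots> = (\<Sum>i\<in>{1..<N}. Tm N a f y i) / real (N - 1)"
  proof -
    have "(\<integral>z. f z \<partial>distr (beta_measure a) (state_space N) (resample N y i)) = Tm N a f y i" if i: "i \<in> {1..<N}" for i
      unfolding Tm_def by (rule integral_distr[OF distr_resample_meas(2)[OF a y i] f])
    then show ?thesis by simp
  qed
  finally show ?thesis unfolding Kop_def .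
qed

lemma resample_meas_y:
  fixes f :: "(nat \<Rightarrow> real) \<Rightarrow> real"
  assumes a: "0 < a" and y: "y \<in> space (state_space N)" and i: "i \<in> {1..<N}" and f: "f \<in> borel_measurable (state_space N)"
  shows "(\<lambda>u. f (resample N y i u)) \<in> borel_measurable (beta_measure a)"
  using measurable_compose[OF distr_resample_meas(2)[OF a y i] f] by (simp add: comp_def)

lemma Tm_cong:
  fixes f g :: "(nat \<Rightarrow> real) \<Rightarrow> real"
  assumes a: "0 < a" and y: "y \<in> Omega N" and i: "i \<in> {1..<N}"
    and f: "f \<in> borel_measurable (state_space N)" and g: "g \<in> borel_measurable (state_space N)"
    and eq: "\<And>z. z \<in> Omega N \<Longrightarrow> f z = g z"
  shows "Tm N a f y i = Tm N a g y i"
  unfolding Tm_def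
proof (rule integral_cong_AE)
  show "(\<lambda>u. f (resample N y i u)) \<in> borel_measurable (beta_measure a)"
    by (rule resample_meas_y[OF a Omega_space[OF y] i f])
  show "(\<lambda>u. g (resample N y i u)) \<in> borel_measurable (beta_measure a)"
    by (rule resample_meas_y[OF a Omega_space[OF y] i g])
  show "AE u in beta_measure a. f (resample N y i u) = g (resample N y i u)"
    using AE_beta[of a] by eventually_elim (auto intro!: eq resample_Omega[OF y i])
qed

lemma meas_kernel_pow:
  fixes f :: "(nat \<Rightarrow> real) \<Rightarrow> real"
  assumes a: "0 < a" and N: "2 \<le> N" and x: "x \<in> Omega N" and f: "f \<in> borel_measurable (state_space N)"
  shows "f \<in> borel_measurable (kernel_pow N a k x)"
  unfolding measurable_cong_sets[OF kernel_pow_facts(2)[OF a N Omega_space[OF x]] refl] by (rule f)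

lemma integrable_kernel_pow:
  fixes f :: "(nat \<Rightarrow> real) \<Rightarrow> real"
  assumes a: "0 < a" and N: "2 \<le> N" and x: "x \<in> Omega N" and f: "f \<in> borel_measurable (state_space N)"
    and B: "\<And>y. y \<in> Omega N \<Longrightarrow> \<bar>f y\<bar> \<le> B"
  shows "integrable (kernel_pow N a k x) f"
proof -
  interpret prob_space "kernel_pow N a k x" by (rule kernel_pow_facts(1)[OF a N Omega_space[OF x]])
  show ?thesis
  proof (rule integrable_const_bound[where B=B])
    show "AE y in kernel_pow N a k x. norm (f y) \<le> B"
      using kernel_pow_AE[OF a N x, of k] by eventually_elim (auto intro: B)
  qed (rule meas_kernel_pow[OF a N x f])
qed

lemma integral_kernel_pow_0:
  fixes f :: "(nat \<Rightarrow> real) \<Rightarrow> real"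
  assumes x: "x \<in> Omega N" and f: "f \<in> borel_measurable (state_space N)"
  shows "(\<integral>y. f y \<partial>kernel_pow N a 0 x) = f x"
  using integral_return[OF Omega_space[OF x] f] by simp

lemma integral_kernel_pow_step:
  fixes f h :: "(nat \<Rightarrow> real) \<Rightarrow> real"
  assumes a: "0 < a" and N: "2 \<le> N" and x: "x \<in> Omega N"
    and f[measurable]: "f \<in> borel_measurable (state_space N)" and B: "\<And>y. y \<in> Omega N \<Longrightarrow> \<bar>f y\<bar> \<le> B"
    and h[measurable]: "h \<in> borel_measurable (state_space N)" and eq: "\<And>y. y \<in> Omega N \<Longrightarrow> Kop N a f y = h y"
  shows "(\<integral>y. f y \<partial>kernel_pow N a (Suc k) x) = (\<integral>y. h y \<partial>kernel_pow N a k x)"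
proof -
  have xs: "x \<in> space (state_space N)" using Omega_space[OF x] .
  define f' where "f' y = indicator (Omega N) y * f y" for y
  have f'[measurable]: "f' \<in> borel_measurable (state_space N)" unfolding f'_def by measurable
  have B': "\<bar>f' y\<bar> \<le> max B 0" for y using B[of y] unfolding f'_def by (auto split: split_indicator)
  have J: "jump_kernel N a \<in> kernel_pow N a k x \<rightarrow>\<^sub>M subprob_algebra (state_space N)"
    by (rule jump_kernel_meas_sub[OF a N kernel_pow_facts(2)[OF a N xs]])
  have "(\<integral>y. f y \<partial>kernel_pow N a (Suc k) x) = (\<integral>y. f' y \<partial>kernel_pow N a (Suc k) x)"
  proof (rule integral_cong_AE)
    show "f \<in> borel_measurable (kernel_pow N a (Suc k) x)" by (rule meas_kernel_pow[OF a N x f])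
    show "f' \<in> borel_measurable (kernel_pow N a (Suc k) x)" by (rule meas_kernel_pow[OF a N x f'])
    show "AE y in kernel_pow N a (Suc k) x. f y = f' y"
      using kernel_pow_AE[OF a N x, of "Suc k"] by eventually_elim (simp add: f'_def)
  qed
  also have "\<dots> = (\<integral>y. (\<integral>z. f' z \<partial>jump_kernel N a y) \<partial>kernel_pow N a k x)"
    unfolding kernel_pow.simps
  proof (rule integral_bind[where K="state_space N" and B="max B 0" and B'=1])
    show "finite_measure (kernel_pow N a k x)"
      by (rule prob_space.axioms(1)[OF kernel_pow_facts(1)[OF a N xs]])
    show "AE y in kernel_pow N a k x. emeasure (jump_kernel N a y) (space (jump_kernel N a y)) \<le> ennreal 1"
    proof (rule AE_I2)
      fix y assume "y \<in> space (kernel_pow N a k x)"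
      then have y: "y \<in> space (state_space N)" using kernel_pow_facts(3)[OF a N xs] by simp
      interpret prob_space "jump_kernel N a y" by (rule jump_kernel_facts(1)[OF a N y])
      show "emeasure (jump_kernel N a y) (space (jump_kernel N a y)) \<le> ennreal 1" by (simp add: emeasure_space_1)
    qed
  qed (use J B' in auto)
  also have "\<dots> = (\<integral>y. h y \<partial>kernel_pow N a k x)"
  proof (rule integral_cong_AE)
    show "(\<lambda>y. \<integral>z. f' z \<partial>jump_kernel N a y) \<in> borel_measurable (kernel_pow N a k x)"
      by (rule measurable_compose[OF J integral_measurable_subprob_algebra[OF f']])
    show "h \<in> borel_measurable (kernel_pow N a k x)" by (rule meas_kernel_pow[OF a N x h])
    show "AE y in kernel_pow N a k x. (\<integral>z. f' z \<partial>jump_kernel N a y) = h y"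
      using kernel_pow_AE[OF a N x, of k]
    proof eventually_elim
      case (elim y)
      have "(\<integral>z. f' z \<partial>jump_kernel N a y) = Kop N a f' y"
        by (rule integral_jump[OF a N Omega_space[OF elim] f' B'])
      also have "\<dots> = Kop N a f y"
        unfolding Kop_def
        by (intro arg_cong2[where f="(/)"] sum.cong refl Tm_cong[OF a elim _ f' f]) (simp_all add: f'_def)
      also have "\<dots> = h y" by (rule eq[OF elim])
      finally show ?case .
    qed
  qed
  finally show ?thesis .
qed

section \<open>Moment computations\<close>

definition gp :: "nat \<Rightarrow> (nat \<Rightarrow> real) \<Rightarrow> nat \<Rightarrow> real" where
  "gp N x j = xb N x j - xb N x (j - 1)"

definition Bnd :: "nat \<Rightarrow> ((nat \<Rightarrow> real) \<Rightarrow> real) \<Rightarrow> bool" where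
  "Bnd N f \<longleftrightarrow> f \<in> borel_measurable (state_space N) \<and> (\<exists>B. \<forall>y\<in>Omega N. \<bar>f y\<bar> \<le> B)"

lemma gp_measurable[measurable]: "(\<lambda>x. gp N x j) \<in> borel_measurable (state_space N)"
  unfolding gp_def by measurable

lemma Bnd_const[simp, intro]: "Bnd N (\<lambda>y. c)"
  unfolding Bnd_def by auto

lemma Bnd_add[intro]: "Bnd N f \<Longrightarrow> Bnd N g \<Longrightarrow> Bnd N (\<lambda>y. f y + g y)"
  unfolding Bnd_def
proof (elim conjE exE, intro conjI exI ballI)
  fix B1 B2 y assume "\<forall>y\<in>Omega N. \<bar>f y\<bar> \<le> B1" "\<forall>y\<in>Omega N. \<bar>g y\<bar> \<le> B2" "y \<in> Omega N"
  then show "\<bar>f y + g y\<bar> \<le> B1 + B2" by (smt (verit))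
qed auto

lemma Bnd_diff[intro]: "Bnd N f \<Longrightarrow> Bnd N g \<Longrightarrow> Bnd N (\<lambda>y. f y - g y)"
  unfolding Bnd_def
proof (elim conjE exE, intro conjI exI ballI)
  fix B1 B2 y assume "\<forall>y\<in>Omega N. \<bar>f y\<bar> \<le> B1" "\<forall>y\<in>Omega N. \<bar>g y\<bar> \<le> B2" "y \<in> Omega N"
  then show "\<bar>f y - g y\<bar> \<le> B1 + B2" by (smt (verit))
qed auto

lemma Bnd_mult[intro]: "Bnd N f \<Longrightarrow> Bnd N g \<Longrightarrow> Bnd N (\<lambda>y. f y * g y)"
  unfolding Bnd_def
proof (elim conjE exE, intro conjI exI ballI)
  fix B1 B2 y assume b: "\<forall>y\<in>Omega N. \<bar>f y\<bar> \<le> B1" "\<forall>y\<in>Omega N. \<bar>g y\<bar> \<le> B2" and y: "y \<in> Omega N"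
  have "\<bar>f y * g y\<bar> = \<bar>f y\<bar> * \<bar>g y\<bar>" by (simp add: abs_mult)
  also have "\<dots> \<le> B1 * B2" using b y by (intro mult_mono) auto
  finally show "\<bar>f y * g y\<bar> \<le> B1 * B2" .
qed auto

lemma Bnd_sum[intro]: "(\<And>i. i \<in> I \<Longrightarrow> Bnd N (f i)) \<Longrightarrow> Bnd N (\<lambda>y. \<Sum>i\<in>I. f i y)"
proof (induction I rule: infinite_finite_induct)
  case (insert i I)
  then have "Bnd N (\<lambda>y. f i y + (\<Sum>i\<in>I. f i y))" by (intro Bnd_add) auto
  then show ?case using insert by simp
qed auto

lemma Bnd_power[intro]: "Bnd N f \<Longrightarrow> Bnd N (\<lambda>y. (f y)^2)"
  using Bnd_mult[of N f f] by (simp add: power2_eq_square)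

lemma Bnd_divide[intro]: "Bnd N f \<Longrightarrow> Bnd N (\<lambda>y. f y / c)"
  using Bnd_mult[of N f "\<lambda>_. 1/c"] by simp

lemma xb_bnd_abs: "y \<in> Omega N \<Longrightarrow> \<bar>xb N y j\<bar> \<le> real N + \<bar>y j\<bar>"
  by (auto simp: xb_def)

lemma Bnd_xb[intro]: "Bnd N (\<lambda>y. xb N y j)"
proof (cases "j \<le> N")
  case True
  then show ?thesis unfolding Bnd_def using Omega_bounds[of _ N j] by (intro conjI exI[of _ "real N"]) auto
next
  case False
  then have "xb N y j = y j" for y by (auto simp: xb_def)
  moreover have "y j = undefined" if "y \<in> Omega N" for y
    using Omega_space[OF that] False by (auto simp: space_SS PiE_def extensional_def)
  ultimately have "\<forall>y\<in>Omega N. \<bar>xb N y j\<bar> \<le> \<bar>undefined::real\<bar>" by (metis order_refl)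
  then show ?thesis unfolding Bnd_def by (intro conjI xb_measurable exI[of _ "\<bar>undefined::real\<bar>"])
qed

lemma Bnd_gp[intro]: "Bnd N (\<lambda>y. gp N y j)"
  unfolding gp_def by (intro Bnd_diff Bnd_xb)

lemma Bnd_integrable:
  assumes a: "0 < a" and N: "2 \<le> N" and x: "x \<in> Omega N" and f: "Bnd N f"
  shows "integrable (kernel_pow N a k x) f"
  using f unfolding Bnd_def using integrable_kernel_pow[OF a N x] by blast

lemma Bnd_step:
  assumes a: "0 < a" and N: "2 \<le> N" and x: "x \<in> Omega N" and f: "Bnd N f"
    and h: "h \<in> borel_measurable (state_space N)" and eq: "\<And>y. y \<in> Omega N \<Longrightarrow> Kop N a f y = h y"
  shows "(\<integral>y. f y \<partial>kernel_pow N a (Suc k) x) = (\<integral>y. h y \<partial>kernel_pow N a k x)"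
  using f unfolding Bnd_def using integral_kernel_pow_step[OF a N x _ _ h eq] by blast

lemma gp_nonneg: "y \<in> Omega N \<Longrightarrow> j \<in> {1..N} \<Longrightarrow> 0 \<le> gp N y j"
  unfolding gp_def using Omega_mono[of y N "j-1" j] by auto

lemma gp_resample:
  assumes i: "i \<in> {1..<N}" and j: "j \<in> {1..N}"
  shows "gp N (resample N y i u) j =
    (if j = i then (1 - u) * (xb N y (i+1) - xb N y (i-1))
     else if j = i + 1 then u * (xb N y (i+1) - xb N y (i-1)) else gp N y j)"
  using i j unfolding gp_def xb_resample[OF i] by (auto simp: algebra_simps)

lemma Tm_poly:
  assumes a: "0 < a" and eq: "\<And>u. f (resample N y i u) = c0 + c1 * u + c2 * u^2"
  shows "Tm N a f y i = c0 + c1 / 2 + c2 * ((a + 1) / (2 * (2*a + 1)))"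
  unfolding Tm_def eq by (rule beta_poly[OF a])

definition m2 :: "real \<Rightarrow> real" where "m2 a = (a + 1) / (2 * (2*a + 1))"

lemma gp_split: "i \<in> {1..<N} \<Longrightarrow> xb N y (i+1) - xb N y (i-1) = gp N y i + gp N y (i+1)"
  unfolding gp_def by simp

lemma Tm_gg:
  assumes a: "0 < a" and i: "i \<in> {1..<N}" and j: "j \<in> {1..N}" and l: "l \<in> {1..N}"
  shows "Tm N a (\<lambda>z. gp N z j * gp N z l) y i =
    (if (j = i \<or> j = i+1) \<and> (l = i \<or> l = i+1) then
        (if j = l then m2 a else 1/2 - m2 a) * (gp N y i + gp N y (i+1))^2
     else if j = i \<or> j = i+1 then (gp N y i + gp N y (i+1)) / 2 * gp N y l
     else if l = i \<or> l = i+1 then gp N y j * ((gp N y i + gp N y (i+1)) / 2)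
     else gp N y j * gp N y l)"
proof -
  define s where "s = gp N y i + gp N y (i+1)"
  have sd: "xb N y (i+1) - xb N y (i-1) = s" unfolding s_def by (rule gp_split[OF i])
  have gi: "gp N (resample N y i u) i = (1 - u) * s" for u
    using gp_resample[OF i, of i y u] i sd by auto
  have gi1: "gp N (resample N y i u) (i+1) = u * s" for u
    using gp_resample[OF i, of "i+1" y u] i sd by auto
  have go: "m \<in> {1..N} \<Longrightarrow> m \<noteq> i \<Longrightarrow> m \<noteq> i + 1 \<Longrightarrow> gp N (resample N y i u) m = gp N y m" for u m
    using gp_resample[OF i, of m y u] by auto
  have gi1': "gp N (resample N y i u) (Suc i) = u * s" for u using gi1[of u] by simp
  note G = gi gi1 gi1' go[OF j] go[OF l]
  consider "j = i" "l = i" | "j = i" "l = i+1" | "j = i+1" "l = i" | "j = i+1" "l = i+1"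
    | "j = i \<or> j = i+1" "l \<noteq> i" "l \<noteq> i+1" | "j \<noteq> i" "j \<noteq> i+1" "l = i \<or> l = i+1"
    | "j \<noteq> i" "j \<noteq> i+1" "l \<noteq> i" "l \<noteq> i+1" by blast
  then show ?thesis
  proof cases
    case 1
    have "Tm N a (\<lambda>z. gp N z j * gp N z l) y i = s^2 + (0 - 2 * s^2) / 2 + s^2 * m2 a"
      unfolding m2_def by (rule Tm_poly[OF a]) (simp add: G 1 sd power2_eq_square algebra_simps)
    then show ?thesis using 1 by (simp add: s_def power2_eq_square)
  next
    case 2
    have "Tm N a (\<lambda>z. gp N z j * gp N z l) y i = 0 + s^2 / 2 + (0 - s^2) * m2 a"
      unfolding m2_def by (rule Tm_poly[OF a]) (simp add: G 2 sd power2_eq_square algebra_simps)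
    then show ?thesis using 2 by (simp add: s_def power2_eq_square algebra_simps)
  next
    case 3
    have "Tm N a (\<lambda>z. gp N z j * gp N z l) y i = 0 + s^2 / 2 + (0 - s^2) * m2 a"
      unfolding m2_def by (rule Tm_poly[OF a]) (simp add: G 3 sd power2_eq_square algebra_simps)
    then show ?thesis using 3 by (simp add: s_def power2_eq_square algebra_simps)
  next
    case 4
    have "Tm N a (\<lambda>z. gp N z j * gp N z l) y i = 0 + 0 / 2 + s^2 * m2 a"
      unfolding m2_def by (rule Tm_poly[OF a]) (simp add: G 4 sd power2_eq_square algebra_simps)
    then show ?thesis using 4 by (simp add: s_def power2_eq_square algebra_simps)
  next
    case 5
    show ?thesis
    proof (cases "j = i")
      case True
      have "Tm N a (\<lambda>z. gp N z j * gp N z l) y i = s * gp N y l + (0 - s * gp N y l) / 2 + 0 * m2 a"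
        unfolding m2_def by (rule Tm_poly[OF a]) (use 5 True in \<open>simp add: G sd algebra_simps\<close>)
      then show ?thesis using 5 by (simp add: s_def field_simps)
    next
      case False
      then have jj: "j = i + 1" using 5 by simp
      have "Tm N a (\<lambda>z. gp N z j * gp N z l) y i = 0 + (s * gp N y l) / 2 + 0 * m2 a"
        unfolding m2_def by (rule Tm_poly[OF a]) (use 5 jj in \<open>simp add: G sd algebra_simps\<close>)
      then show ?thesis using 5 by (simp add: s_def field_simps)
    qed
  next
    case 6
    show ?thesis
    proof (cases "l = i")
      case True
      have "Tm N a (\<lambda>z. gp N z j * gp N z l) y i = s * gp N y j + (0 - s * gp N y j) / 2 + 0 * m2 a"
        unfolding m2_def by (rule Tm_poly[OF a]) (use 6 True in \<open>simp add: G sd algebra_simps\<close>)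
      then show ?thesis using 6 by (simp add: s_def field_simps)
    next
      case False
      then have ll: "l = i + 1" using 6 by simp
      have "Tm N a (\<lambda>z. gp N z j * gp N z l) y i = 0 + (s * gp N y j) / 2 + 0 * m2 a"
        unfolding m2_def by (rule Tm_poly[OF a]) (use 6 ll in \<open>simp add: G sd algebra_simps\<close>)
      then show ?thesis using 6 by (simp add: s_def field_simps)
    qed
  next
    case 7
    have "Tm N a (\<lambda>z. gp N z j * gp N z l) y i = gp N y j * gp N y l + 0 / 2 + 0 * m2 a"
      unfolding m2_def by (rule Tm_poly[OF a]) (use 7 in \<open>simp add: G\<close>)
    then show ?thesis using 7 by simp
  qed
qed

lemma Bnd_If[intro]: "Bnd N f \<Longrightarrow> Bnd N g \<Longrightarrow> Bnd N (\<lambda>y. if P then f y else g y)"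
  by (cases P) auto

lemma m2_bounds: "0 < a \<Longrightarrow> 0 \<le> m2 a \<and> m2 a \<le> 1/2"
  unfolding m2_def by (auto simp: field_simps)

lemma E_lin3:
  assumes a: "0 < a" and N: "2 \<le> N" and x: "x \<in> Omega N"
    and f: "Bnd N f1" "Bnd N f2" "Bnd N f3"
  shows "(\<integral>y. c1 * f1 y + c2 * f2 y + c3 * f3 y \<partial>kernel_pow N a k x)
       = c1 * (\<integral>y. f1 y \<partial>kernel_pow N a k x) + c2 * (\<integral>y. f2 y \<partial>kernel_pow N a k x) + c3 * (\<integral>y. f3 y \<partial>kernel_pow N a k x)"
proof -
  note I = Bnd_integrable[OF a N x f(1), of k] Bnd_integrable[OF a N x f(2), of k] Bnd_integrable[OF a N x f(3), of k]
  show ?thesis using I by (simp add: Bochner_Integration.integral_add)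
qed

lemma E_sum_div:
  assumes a: "0 < a" and N: "2 \<le> N" and x: "x \<in> Omega N"
    and f: "\<And>i. i \<in> I \<Longrightarrow> Bnd N (F i)"
  shows "(\<integral>y. (\<Sum>i\<in>I. F i y) / c \<partial>kernel_pow N a k x) = (\<Sum>i\<in>I. (\<integral>y. F i y \<partial>kernel_pow N a k x)) / c"
  using Bnd_integrable[OF a N x f] by (simp add: Bochner_Integration.integral_sum)

lemma m2_mul1: assumes a: "0 < a" shows "m2 a * (8*(2*a+1)/a) = 4*(a+1)/a"
proof -
  have p: "2*a+1 > 0" using a by simp
  have "m2 a * (8*(2*a+1)/a) = ((a+1) * 8 * (2*a+1)) / ((2*(2*a+1)) * a)"
    unfolding m2_def times_divide_times_eq by (simp only: mult_ac)
  also have "\<dots> = (4*(a+1)) * (2*(2*a+1)) / (a * (2*(2*a+1)))" by (rule arg_cong2[where f="(/)"]) (simp_all add: algebra_simps)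
  also have "\<dots> = 4*(a+1)/a" using p by (subst mult_divide_mult_cancel_right) auto
  finally show ?thesis .
qed
lemma m2_mul2: assumes a: "0 < a" shows "(1/2 - m2 a) * (8*(2*a+1)/a) = 4"
proof -
  have p: "2*a+1 > 0" using a by simp
  have "1/2 - m2 a = a / (2*(2*a+1))" unfolding m2_def using p by (simp add: field_simps)
  then have "(1/2 - m2 a) * (8*(2*a+1)/a) = (a * 8 * (2*a+1)) / ((2*(2*a+1)) * a)"
    by (simp add: mult.assoc)
  also have "\<dots> = 4 * (a * (2*(2*a+1))) / (a * (2*(2*a+1)))" by (rule arg_cong2[where f="(/)"]) (simp_all add: algebra_simps)
  also have "\<dots> = 4" using p a by simp
  finally show ?thesis .
qed
definition bd :: "real \<Rightarrow> nat \<Rightarrow> nat \<Rightarrow> real" where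
  "bd a j l = (if j = l then 4 * (a + 1) / a else 4)"

lemma bd_ge4: "0 < a \<Longrightarrow> 4 \<le> bd a j l"
  unfolding bd_def by (auto simp: field_simps)

lemma box:
  assumes a: "0 < a" and N: "2 \<le> N" and x: "x \<in> Omega N"
    and x0: "\<And>j. j \<in> {1..N} \<Longrightarrow> gp N x j \<le> 2"
  shows "\<forall>j\<in>{1..N}. \<forall>l\<in>{1..N}. (\<integral>y. gp N y j * gp N y l \<partial>kernel_pow N a k x) \<le> bd a j l"
proof (induction k)
  case 0
  show ?case
  proof (intro ballI)
    fix j l assume j: "j \<in> {1..N}" and l: "l \<in> {1..N}"
    have "(\<integral>y. gp N y j * gp N y l \<partial>kernel_pow N a 0 x) = gp N x j * gp N x l"
      by (rule integral_kernel_pow_0[OF x]) measurable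
    also have "\<dots> \<le> 2 * 2" using x0[OF j] x0[OF l] gp_nonneg[OF x j] gp_nonneg[OF x l] by (intro mult_mono) auto
    also have "\<dots> \<le> bd a j l" using bd_ge4[OF a] by simp
    finally show "(\<integral>y. gp N y j * gp N y l \<partial>kernel_pow N a 0 x) \<le> bd a j l" .
  qed
next
  case (Suc k)
  let ?E = "\<lambda>f. (\<integral>y. f y \<partial>kernel_pow N a k x)"
  have IH: "?E (\<lambda>y. gp N y j * gp N y l) \<le> bd a j l" if "j \<in> {1..N}" "l \<in> {1..N}" for j l
    using Suc that by blast
  show ?case
  proof (intro ballI)
    fix j l assume j: "j \<in> {1..N}" and l: "l \<in> {1..N}"
    define F where "F i y =
    (if (j = i \<or> j = i+1) \<and> (l = i \<or> l = i+1) then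
        (if j = l then m2 a else 1/2 - m2 a) * (gp N y i + gp N y (i+1))^2
     else if j = i \<or> j = i+1 then (gp N y i + gp N y (i+1)) / 2 * gp N y l
     else if l = i \<or> l = i+1 then gp N y j * ((gp N y i + gp N y (i+1)) / 2)
     else gp N y j * gp N y l)" for i y
    have FB: "Bnd N (F i)" for i unfolding F_def by (intro Bnd_If Bnd_mult Bnd_add Bnd_power Bnd_divide Bnd_gp Bnd_const)
    have Fm: "F i \<in> borel_measurable (state_space N)" for i using FB[of i] unfolding Bnd_def by blast
    have "(\<integral>y. gp N y j * gp N y l \<partial>kernel_pow N a (Suc k) x) = ?E (\<lambda>y. (\<Sum>i\<in>{1..<N}. F i y) / real (N - 1))"
    proof (rule Bnd_step[OF a N x])
      show "Bnd N (\<lambda>y. gp N y j * gp N y l)" by (intro Bnd_mult Bnd_gp)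
      show "(\<lambda>y. (\<Sum>i\<in>{1..<N}. F i y) / real (N - 1)) \<in> borel_measurable (state_space N)"
        using Fm by measurable
      fix y assume y: "y \<in> Omega N"
      show "Kop N a (\<lambda>y. gp N y j * gp N y l) y = (\<Sum>i\<in>{1..<N}. F i y) / real (N - 1)"
        unfolding Kop_def F_def using Tm_gg[OF a _ j l] by simp
    qed
    also have "\<dots> = (\<Sum>i\<in>{1..<N}. ?E (F i)) / real (N - 1)"
      by (rule E_sum_div[OF a N x FB])
    also have "\<dots> \<le> (\<Sum>i\<in>{1..<N}. bd a j l) / real (N - 1)"
    proof (intro divide_right_mono sum_mono)
      fix i assume i: "i \<in> {1..<N}"
      have i1: "i \<in> {1..N}" "i + 1 \<in> {1..N}" using i by auto
      have m2: "0 \<le> m2 a" "m2 a \<le> 1/2" using m2_bounds[OF a] by auto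
      show "?E (F i) \<le> bd a j l"
      proof (cases "(j = i \<or> j = i+1) \<and> (l = i \<or> l = i+1)")
        case True
        define c where "c = (if j = l then m2 a else 1/2 - m2 a)"
        have c0: "0 \<le> c" using m2 unfolding c_def by auto
        have "?E (F i) = ?E (\<lambda>y. c * (gp N y i * gp N y i) + c * (gp N y (i+1) * gp N y (i+1)) + (2*c) * (gp N y i * gp N y (i+1)))"
          unfolding F_def c_def[symmetric] using True by (intro Bochner_Integration.integral_cong refl) (simp add: power2_eq_square algebra_simps)
        also have "\<dots> = c * ?E (\<lambda>y. gp N y i * gp N y i) + c * ?E (\<lambda>y. gp N y (i+1) * gp N y (i+1)) + (2*c) * ?E (\<lambda>y. gp N y i * gp N y (i+1))"
          by (rule E_lin3[OF a N x]) (auto intro!: Bnd_mult Bnd_gp)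
        also have "\<dots> \<le> c * bd a i i + c * bd a (i+1) (i+1) + (2*c) * bd a i (i+1)"
          using c0 IH[OF i1(1) i1(1)] IH[OF i1(2) i1(2)] IH[OF i1(1) i1(2)]
          by (intro add_mono mult_left_mono) auto
        also have "\<dots> = c * (8 * (2*a+1) / a)"
          using a unfolding bd_def by (simp add: field_simps)
        also have "\<dots> = bd a j l"
          using True m2_mul1[OF a] m2_mul2[OF a] unfolding c_def bd_def by auto
        finally show ?thesis .
      next
        case False
        show ?thesis
        proof (cases "j = i \<or> j = i+1")
          case True
          with False have ln: "l \<noteq> i" "l \<noteq> i+1" by auto
          have "?E (F i) = ?E (\<lambda>y. (1/2) * (gp N y i * gp N y l) + (1/2) * (gp N y (i+1) * gp N y l) + 0 * 0)"
            unfolding F_def using True False by (intro Bochner_Integration.integral_cong refl) (simp add: algebra_simps)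
          also have "\<dots> = (1/2) * ?E (\<lambda>y. gp N y i * gp N y l) + (1/2) * ?E (\<lambda>y. gp N y (i+1) * gp N y l) + 0 * ?E (\<lambda>y. 0)"
            by (rule E_lin3[OF a N x]) (auto intro!: Bnd_mult Bnd_gp)
          also have "\<dots> \<le> (1/2) * bd a i l + (1/2) * bd a (i+1) l"
            using IH[OF i1(1) l] IH[OF i1(2) l] by simp
          also have "\<dots> = bd a j l" using True ln unfolding bd_def by auto
          finally show ?thesis .
        next
          case jn: False
          show ?thesis
          proof (cases "l = i \<or> l = i+1")
            case True
            have "?E (F i) = ?E (\<lambda>y. (1/2) * (gp N y j * gp N y i) + (1/2) * (gp N y j * gp N y (i+1)) + 0 * 0)"
              unfolding F_def using True False jn by (intro Bochner_Integration.integral_cong refl) (simp add: algebra_simps)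
            also have "\<dots> = (1/2) * ?E (\<lambda>y. gp N y j * gp N y i) + (1/2) * ?E (\<lambda>y. gp N y j * gp N y (i+1)) + 0 * ?E (\<lambda>y. 0)"
              by (rule E_lin3[OF a N x]) (auto intro!: Bnd_mult Bnd_gp)
            also have "\<dots> \<le> (1/2) * bd a j i + (1/2) * bd a j (i+1)"
              using IH[OF j i1(1)] IH[OF j i1(2)] by simp
            also have "\<dots> = bd a j l" using True jn unfolding bd_def by auto
            finally show ?thesis .
          next
            case False
            have "?E (F i) = ?E (\<lambda>y. gp N y j * gp N y l)"
              unfolding F_def using False jn by simp
            also have "\<dots> \<le> bd a j l" by (rule IH[OF j l])
            finally show ?thesis .
          qed
        qed
      qed
    qed simp
    also have "\<dots> = bd a j l" using N by simp
    finally show "(\<integral>y. gp N y j * gp N y l \<partial>kernel_pow N a (Suc k) x) \<le> bd a j l" .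
  qed
qed

definition sn :: "nat \<Rightarrow> nat \<Rightarrow> real" where "sn N i = sin (pi * real i / real N)"
definition Phi :: "nat \<Rightarrow> (nat \<Rightarrow> real) \<Rightarrow> real" where
  "Phi N x = (\<Sum>i\<in>{1..<N}. sn N i * (xb N x i - real i))"
definition gam :: "nat \<Rightarrow> real" where "gam N = 1 - cos (pi / real N)"

lemma Phi_measurable[measurable]: "Phi N \<in> borel_measurable (state_space N)"
  unfolding Phi_def by measurable

lemma Bnd_Phi[intro]: "Bnd N (Phi N)"
proof -
  have "Bnd N (\<lambda>y. \<Sum>i\<in>{1..<N}. sn N i * (xb N y i - real i))"
    by (intro Bnd_sum Bnd_mult Bnd_diff Bnd_xb Bnd_const)
  then show ?thesis unfolding Phi_def[abs_def] .
qed

lemma shift1: "w 0 = 0 \<Longrightarrow> (\<Sum>i\<in>{1..<Suc m}. s i * w (i-1)) = (\<Sum>j\<in>{1..<Suc m}. s (j+1) * w j) - s (Suc m) * w m"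
  for s w :: "nat \<Rightarrow> real"
  by (induction m) (auto simp: algebra_simps)

lemma shift2: "s 0 = 0 \<Longrightarrow> (\<Sum>i\<in>{1..<Suc m}. s i * w (i+1)) = (\<Sum>j\<in>{1..<Suc m}. s (j-1) * w j) + s m * w (Suc m)"
  for s w :: "nat \<Rightarrow> real"
  by (induction m) (auto simp: algebra_simps)

lemma sn_0[simp]: "sn N 0 = 0" by (simp add: sn_def)
lemma sn_N[simp]: "1 \<le> N \<Longrightarrow> sn N N = 0" by (simp add: sn_def)

lemma sn_rec: "1 \<le> N \<Longrightarrow> 1 \<le> j \<Longrightarrow> sn N (j+1) + sn N (j-1) = 2 * cos (pi / real N) * sn N j"
proof -
  assume N: "1 \<le> N" and j: "1 \<le> j"
  have e1: "pi * real (j+1) / real N = pi * real j / real N + pi / real N" by (simp add: add_divide_distrib distrib_left)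
  have e2: "pi * real (j-1) / real N = pi * real j / real N - pi / real N" using j by (simp add: diff_divide_distrib right_diff_distrib of_nat_diff)
  show ?thesis unfolding sn_def e1 e2 sin_add sin_diff by simp
qed

lemma lap_sin:
  fixes w :: "nat \<Rightarrow> real"
  assumes N: "2 \<le> N" and w0: "w 0 = 0" and wN: "w N = 0"
  shows "(\<Sum>i\<in>{1..<N}. sn N i * (w (i-1) + w (i+1) - 2 * w i)) = - 2 * gam N * (\<Sum>i\<in>{1..<N}. sn N i * w i)"
proof -
  obtain m where m: "N = Suc m" using N by (cases N) auto
  have A: "(\<Sum>i\<in>{1..<N}. sn N i * w (i-1)) = (\<Sum>j\<in>{1..<N}. sn N (j+1) * w j)"
    using shift1[of w "sn N" m, OF w0] m by simp
  have B: "(\<Sum>i\<in>{1..<N}. sn N i * w (i+1)) = (\<Sum>j\<in>{1..<N}. sn N (j-1) * w j)"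
    using shift2[of "sn N" w m] wN m by simp
  have "(\<Sum>i\<in>{1..<N}. sn N i * (w (i-1) + w (i+1) - 2 * w i))
      = (\<Sum>i\<in>{1..<N}. sn N i * w (i-1)) + (\<Sum>i\<in>{1..<N}. sn N i * w (i+1)) - (\<Sum>i\<in>{1..<N}. 2 * sn N i * w i)"
    by (simp add: sum.distrib sum_subtractf algebra_simps)
  also have "\<dots> = (\<Sum>j\<in>{1..<N}. (sn N (j+1) + sn N (j-1) - 2 * sn N j) * w j)"
    unfolding A B by (simp add: sum.distrib sum_subtractf algebra_simps)
  also have "\<dots> = (\<Sum>j\<in>{1..<N}. (- 2 * gam N) * (sn N j * w j))"
  proof (intro sum.cong refl)
    fix j assume j: "j \<in> {1..<N}"
    have rec: "sn N (j+1) + sn N (j-1) = 2 * cos (pi / real N) * sn N j" using j N by (intro sn_rec) auto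
    have "(sn N (j+1) + sn N (j-1) - 2 * sn N j) * w j = (2 * cos (pi / real N) * sn N j - 2 * sn N j) * w j"
      by (simp only: rec)
    also have "\<dots> = (- 2 * gam N) * (sn N j * w j)" by (simp add: gam_def algebra_simps)
    finally show "(sn N (j+1) + sn N (j-1) - 2 * sn N j) * w j = (- 2 * gam N) * (sn N j * w j)" .
  qed
  also have "\<dots> = - 2 * gam N * (\<Sum>i\<in>{1..<N}. sn N i * w i)"
    by (simp add: sum_distrib_left)
  finally show ?thesis .
qed

lemma Phi_resample:
  assumes i: "i \<in> {1..<N}"
  shows "Phi N (resample N y i u) = Phi N y + sn N i * (u * xb N y (i-1) + (1-u) * xb N y (i+1) - xb N y i)"
proof -
  have "Phi N (resample N y i u) - Phi N y = (\<Sum>k\<in>{1..<N}. sn N k * (xb N (resample N y i u) k - xb N y k))"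
    unfolding Phi_def by (simp add: sum_subtractf[symmetric] algebra_simps)
  also have "\<dots> = (\<Sum>k\<in>{1..<N}. if k = i then sn N i * (u * xb N y (i-1) + (1-u) * xb N y (i+1) - xb N y i) else 0)"
    unfolding xb_resample[OF i] by (intro sum.cong refl) auto
  also have "\<dots> = sn N i * (u * xb N y (i-1) + (1-u) * xb N y (i+1) - xb N y i)"
    using i by simp
  finally show ?thesis by simp
qed

lemma Tm_Phi:
  assumes a: "0 < a" and i: "i \<in> {1..<N}"
  shows "Tm N a (Phi N) y i = Phi N y + sn N i * ((xb N y (i-1) + xb N y (i+1)) / 2 - xb N y i)"
proof -
  have "Tm N a (Phi N) y i = (Phi N y + sn N i * (xb N y (i+1) - xb N y i)) + (sn N i * (xb N y (i-1) - xb N y (i+1))) / 2 + 0 * ((a + 1) / (2 * (2*a + 1)))"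
    by (rule Tm_poly[OF a]) (simp add: Phi_resample[OF i] algebra_simps)
  then show ?thesis by (simp add: field_simps)
qed

lemma lap_xb:
  assumes N: "2 \<le> N"
  shows "(\<Sum>i\<in>{1..<N}. sn N i * ((xb N y (i-1) + xb N y (i+1)) / 2 - xb N y i)) = - gam N * Phi N y"
proof -
  define w where "w k = xb N y k - real k" for k
  have w0: "w 0 = 0" and wN: "w N = 0" unfolding w_def by simp_all
  have "(\<Sum>i\<in>{1..<N}. sn N i * ((xb N y (i-1) + xb N y (i+1)) / 2 - xb N y i))
      = (\<Sum>i\<in>{1..<N}. sn N i * (w (i-1) + w (i+1) - 2 * w i)) / 2"
    unfolding sum_divide_distrib
  proof (intro sum.cong refl)
    fix i assume i: "i \<in> {1..<N}"
    have r: "real (i - 1) = real i - 1" using i by (simp add: of_nat_diff)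
    show "sn N i * ((xb N y (i-1) + xb N y (i+1)) / 2 - xb N y i) = sn N i * (w (i-1) + w (i+1) - 2 * w i) / 2"
      unfolding w_def r by (simp add: field_simps)
  qed
  also have "\<dots> = - gam N * Phi N y"
    by (subst lap_sin[OF N w0 wN]) (simp add: Phi_def w_def)
  finally show ?thesis .
qed

lemma Kop_Phi:
  assumes a: "0 < a" and N: "2 \<le> N"
  shows "Kop N a (Phi N) y = (1 - gam N / real (N - 1)) * Phi N y"
proof -
  have N1: "real (N - 1) > 0" using N by simp
  have "Kop N a (Phi N) y = (\<Sum>i\<in>{1..<N}. Phi N y + sn N i * ((xb N y (i-1) + xb N y (i+1)) / 2 - xb N y i)) / real (N - 1)"
    unfolding Kop_def by (simp add: Tm_Phi[OF a])
  also have "\<dots> = (real (N - 1) * Phi N y - gam N * Phi N y) / real (N - 1)"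
    unfolding sum.distrib lap_xb[OF N] by simp
  also have "\<dots> = (1 - gam N / real (N - 1)) * Phi N y"
    using N1 by (simp add: field_simps)
  finally show ?thesis .
qed

definition Qf :: "nat \<Rightarrow> real \<Rightarrow> nat \<Rightarrow> (nat \<Rightarrow> real) \<Rightarrow> real" where
  "Qf N a i y = m2 a * (gp N y i + gp N y (i+1))^2 - gp N y i * gp N y (i+1)"

lemma Tm_Phi2:
  assumes a: "0 < a" and i: "i \<in> {1..<N}"
  shows "Tm N a (\<lambda>z. (Phi N z)^2) y i = (Phi N y)^2
     + 2 * Phi N y * (sn N i * ((xb N y (i-1) + xb N y (i+1)) / 2 - xb N y i)) + (sn N i)^2 * Qf N a i y"
proof -
  define c where "c = xb N y (i+1) - xb N y i"
  define d where "d = xb N y (i-1) - xb N y (i+1)"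
  define P where "P = Phi N y"
  define s where "s = sn N i"
  have "Tm N a (\<lambda>z. (Phi N z)^2) y i = (P + s * c)^2 + (2 * (P + s * c) * s * d) / 2 + (s^2 * d^2) * ((a + 1) / (2 * (2*a + 1)))"
    by (rule Tm_poly[OF a]) (simp add: Phi_resample[OF i] P_def s_def c_def d_def power2_eq_square algebra_simps)
  also have "\<dots> = P^2 + 2 * P * (s * (c + d / 2)) + s^2 * (m2 a * d^2 + c * (c + d))"
    unfolding m2_def[symmetric] by (simp add: power2_eq_square field_simps)
  also have "c + d / 2 = (xb N y (i-1) + xb N y (i+1)) / 2 - xb N y i"
    unfolding c_def d_def by (simp add: field_simps)
  also have "m2 a * d^2 + c * (c + d) = Qf N a i y"
  proof -
    have dd: "d^2 = (gp N y i + gp N y (i+1))^2" unfolding d_def using gp_split[OF i, of y]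
      by (simp add: power2_commute)
    have cc: "c = gp N y (i+1)" unfolding c_def gp_def by simp
    have cd: "c + d = - gp N y i" unfolding c_def d_def gp_def by simp
    have "c * (c + d) = - (gp N y i * gp N y (i+1))" by (subst cd, subst cc) simp
    then show ?thesis unfolding Qf_def dd by simp
  qed
  finally show ?thesis unfolding P_def s_def .
qed

lemma Kop_Phi2:
  assumes a: "0 < a" and N: "2 \<le> N"
  shows "Kop N a (\<lambda>z. (Phi N z)^2) y = (1 - 2 * gam N / real (N - 1)) * (Phi N y)^2
      + (\<Sum>i\<in>{1..<N}. (sn N i)^2 * Qf N a i y) / real (N - 1)"
proof -
  have N1: "real (N - 1) > 0" using N by simp
  have "Kop N a (\<lambda>z. (Phi N z)^2) y = (\<Sum>i\<in>{1..<N}. (Phi N y)^2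
     + 2 * Phi N y * (sn N i * ((xb N y (i-1) + xb N y (i+1)) / 2 - xb N y i)) + (sn N i)^2 * Qf N a i y) / real (N - 1)"
    unfolding Kop_def by (simp add: Tm_Phi2[OF a])
  also have "\<dots> = (real (N - 1) * (Phi N y)^2 + 2 * Phi N y * (- gam N * Phi N y) + (\<Sum>i\<in>{1..<N}. (sn N i)^2 * Qf N a i y)) / real (N - 1)"
    unfolding sum.distrib sum_distrib_left[symmetric] lap_xb[OF N] by simp
  also have "\<dots> = (1 - 2 * gam N / real (N - 1)) * (Phi N y)^2 + (\<Sum>i\<in>{1..<N}. (sn N i)^2 * Qf N a i y) / real (N - 1)"
  proof -
    have gen: "(M * P^2 + 2 * P * (- g * P) + Z) / M = (1 - 2 * g / M) * P^2 + Z / M" if "M > 0" for M P g Z :: real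
      using that by (simp add: field_simps power2_eq_square)
    show ?thesis by (rule gen[OF N1])
  qed
  finally show ?thesis .
qed

lemma Bnd_Qf[intro]: "Bnd N (Qf N a i)"
proof -
  have "Bnd N (\<lambda>y. m2 a * (gp N y i + gp N y (i+1))^2 - gp N y i * gp N y (i+1))"
    by (intro Bnd_diff Bnd_mult Bnd_power Bnd_add Bnd_gp Bnd_const)
  then show ?thesis unfolding Qf_def[abs_def] .
qed

lemma Qf_measurable[measurable]: "Qf N a i \<in> borel_measurable (state_space N)"
  using Bnd_Qf unfolding Bnd_def by blast

lemma mean_Phi:
  assumes a: "0 < a" and N: "2 \<le> N" and x: "x \<in> Omega N"
  shows "(\<integral>y. Phi N y \<partial>kernel_pow N a k x) = (1 - gam N / real (N - 1))^k * Phi N x"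
proof (induction k)
  case 0
  show ?case using integral_kernel_pow_0[OF x Phi_measurable, of a] by simp
next
  case (Suc k)
  have "(\<integral>y. Phi N y \<partial>kernel_pow N a (Suc k) x) = (\<integral>y. (1 - gam N / real (N - 1)) * Phi N y \<partial>kernel_pow N a k x)"
    by (rule Bnd_step[OF a N x Bnd_Phi]) (auto simp: Kop_Phi[OF a N])
  also have "\<dots> = (1 - gam N / real (N - 1)) * (\<integral>y. Phi N y \<partial>kernel_pow N a k x)" by simp
  finally show ?case using Suc by simp
qed

lemma gam_pos: assumes N: "2 \<le> N" shows "0 < gam N" "gam N \<le> 1"
proof -
  have p: "0 < pi / real N" "pi / real N \<le> pi / 2" using N pi_gt_zero by (auto simp: field_simps)
  have "cos (pi / real N) < 1"
    using cos_monotone_0_pi[of 0 "pi / real N"] p pi_gt_zero by simp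
  moreover have "0 \<le> cos (pi / real N)" using p by (intro cos_ge_zero) auto
  ultimately show "0 < gam N" "gam N \<le> 1" unfolding gam_def by auto
qed

lemma EQ_bound:
  assumes a: "0 < a" and N: "2 \<le> N" and x: "x \<in> Omega N"
    and x0: "\<And>j. j \<in> {1..N} \<Longrightarrow> gp N x j \<le> 2" and i: "i \<in> {1..<N}"
  shows "(\<integral>y. Qf N a i y \<partial>kernel_pow N a k x) \<le> 4 * (a + 1) / a"
proof -
  let ?E = "\<lambda>f. (\<integral>y. f y \<partial>kernel_pow N a k x)"
  have i1: "i \<in> {1..N}" "i + 1 \<in> {1..N}" using i by auto
  note B = box[OF a N x x0, of k]
  have "?E (Qf N a i) = ?E (\<lambda>y. m2 a * (gp N y i * gp N y i) + m2 a * (gp N y (i+1) * gp N y (i+1)) + (2 * m2 a - 1) * (gp N y i * gp N y (i+1)))"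
    unfolding Qf_def by (intro Bochner_Integration.integral_cong refl) (simp add: power2_eq_square algebra_simps)
  also have "\<dots> = m2 a * ?E (\<lambda>y. gp N y i * gp N y i) + m2 a * ?E (\<lambda>y. gp N y (i+1) * gp N y (i+1)) + (2 * m2 a - 1) * ?E (\<lambda>y. gp N y i * gp N y (i+1))"
    by (rule E_lin3[OF a N x]) (auto intro!: Bnd_mult Bnd_gp)
  also have "\<dots> \<le> m2 a * bd a i i + m2 a * bd a (i+1) (i+1) + 0"
  proof -
    have h1: "m2 a * ?E (\<lambda>y. gp N y i * gp N y i) \<le> m2 a * bd a i i"
      using B i1 m2_bounds[OF a] by (intro mult_left_mono) auto
    have h2: "m2 a * ?E (\<lambda>y. gp N y (i+1) * gp N y (i+1)) \<le> m2 a * bd a (i+1) (i+1)"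
      using B i1 m2_bounds[OF a] by (intro mult_left_mono) auto
    have "0 \<le> ?E (\<lambda>y. gp N y i * gp N y (i+1))"
      by (rule integral_nonneg_AE) (use kernel_pow_AE[OF a N x, of k] i1 in \<open>auto elim!: eventually_mono intro!: mult_nonneg_nonneg gp_nonneg\<close>)
    moreover have "2 * m2 a - 1 \<le> 0" using m2_bounds[OF a] by simp
    ultimately have h3: "(2 * m2 a - 1) * ?E (\<lambda>y. gp N y i * gp N y (i+1)) \<le> 0"
      by (simp add: mult_nonpos_nonneg)
    from h1 h2 h3 show ?thesis by linarith
  qed
  also have "\<dots> \<le> m2 a * (8 * (2*a+1) / a)"
  proof -
    have "m2 a * bd a i i + m2 a * bd a (i+1) (i+1) + 0 = m2 a * (8 * (a+1) / a)"
      unfolding bd_def by (simp add: field_simps)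
    also have "\<dots> \<le> m2 a * (8 * (2*a+1) / a)"
      using m2_bounds[OF a] a by (intro mult_left_mono divide_right_mono) auto
    finally show ?thesis .
  qed
  also have "\<dots> = 4 * (a + 1) / a" by (rule m2_mul1[OF a])
  finally show ?thesis .
qed

definition SS :: "nat \<Rightarrow> real" where "SS N = (\<Sum>i\<in>{1..<N}. (sn N i)^2)"

lemma second_Phi_step:
  assumes a: "0 < a" and N: "2 \<le> N" and x: "x \<in> Omega N"
    and x0: "\<And>j. j \<in> {1..N} \<Longrightarrow> gp N x j \<le> 2"
  shows "(\<integral>y. (Phi N y)^2 \<partial>kernel_pow N a (Suc k) x)
    \<le> (1 - 2 * gam N / real (N - 1)) * (\<integral>y. (Phi N y)^2 \<partial>kernel_pow N a k x) + 4 * (a + 1) / a * SS N / real (N - 1)"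
proof -
  let ?E = "\<lambda>f. (\<integral>y. f y \<partial>kernel_pow N a k x)"
  have N1: "real (N - 1) > 0" using N by simp
  have "(\<integral>y. (Phi N y)^2 \<partial>kernel_pow N a (Suc k) x)
      = ?E (\<lambda>y. (1 - 2 * gam N / real (N - 1)) * (Phi N y)^2 + (\<Sum>i\<in>{1..<N}. (sn N i)^2 * Qf N a i y) / real (N - 1))"
    by (rule Bnd_step[OF a N x]) (auto simp: Kop_Phi2[OF a N] intro!: Bnd_power Bnd_Phi)
  also have "\<dots> = (1 - 2 * gam N / real (N - 1)) * ?E (\<lambda>y. (Phi N y)^2) + (\<Sum>i\<in>{1..<N}. (sn N i)^2 * ?E (Qf N a i)) / real (N - 1)"
  proof -
    have I1: "integrable (kernel_pow N a k x) (\<lambda>y. (1 - 2 * gam N / real (N - 1)) * (Phi N y)^2)"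
      by (rule Bnd_integrable[OF a N x]) (intro Bnd_mult Bnd_power Bnd_Phi Bnd_const)
    have I2: "integrable (kernel_pow N a k x) (\<lambda>y. (\<Sum>i\<in>{1..<N}. (sn N i)^2 * Qf N a i y) / real (N - 1))"
      by (rule Bnd_integrable[OF a N x]) (intro Bnd_divide Bnd_sum Bnd_mult Bnd_Qf Bnd_const)
    have "?E (\<lambda>y. (\<Sum>i\<in>{1..<N}. (sn N i)^2 * Qf N a i y) / real (N - 1)) = (\<Sum>i\<in>{1..<N}. ?E (\<lambda>y. (sn N i)^2 * Qf N a i y)) / real (N - 1)"
      by (rule E_sum_div[OF a N x]) (intro Bnd_mult Bnd_Qf Bnd_const)
    then show ?thesis using I1 I2 by (simp add: Bochner_Integration.integral_add)
  qed
  also have "\<dots> \<le> (1 - 2 * gam N / real (N - 1)) * ?E (\<lambda>y. (Phi N y)^2) + (\<Sum>i\<in>{1..<N}. (sn N i)^2 * (4 * (a + 1) / a)) / real (N - 1)"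
    using N1 EQ_bound[OF a N x x0] by (intro add_left_mono divide_right_mono sum_mono mult_left_mono) auto
  also have "\<dots> = (1 - 2 * gam N / real (N - 1)) * ?E (\<lambda>y. (Phi N y)^2) + 4 * (a + 1) / a * SS N / real (N - 1)"
  proof -
    have "(\<Sum>i\<in>{1..<N}. (sn N i)^2 * (4 * (a + 1) / a)) = 4 * (a + 1) / a * SS N"
      unfolding SS_def by (simp add: sum_distrib_left sum_divide_distrib mult_ac)
    then show ?thesis by simp
  qed
  finally show ?thesis .
qed

lemma second_Phi:
  assumes a: "0 < a" and N: "2 \<le> N" and x: "x \<in> Omega N"
    and x0: "\<And>j. j \<in> {1..N} \<Longrightarrow> gp N x j \<le> 2" and b: "2 * gam N \<le> real (N - 1)"
  shows "(\<integral>y. (Phi N y)^2 \<partial>kernel_pow N a k x)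
    \<le> (1 - gam N / real (N - 1))^(2*k) * (Phi N x)^2 + 4 * (a + 1) / a * SS N / (2 * gam N)"
proof (induction k)
  case 0
  have "0 \<le> 4 * (a + 1) / a * SS N / (2 * gam N)"
    using a gam_pos[OF N] unfolding SS_def by (intro divide_nonneg_nonneg mult_nonneg_nonneg sum_nonneg) auto
  moreover have "(\<integral>y. (Phi N y)^2 \<partial>kernel_pow N a 0 x) = (Phi N x)^2"
    by (rule integral_kernel_pow_0[OF x]) measurable
  ultimately show ?case by simp
next
  case (Suc k)
  define r where "r = 1 - gam N / real (N - 1)"
  define bb where "bb = 1 - 2 * gam N / real (N - 1)"
  define V where "V = 4 * (a + 1) / a * SS N / (2 * gam N)"
  have N1: "real (N - 1) > 0" using N by simp
  have g: "0 < gam N" using gam_pos[OF N] by simp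
  have bb0: "0 \<le> bb" unfolding bb_def using b N1 by (simp add: field_simps)
  have bbr: "bb \<le> r^2"
  proof -
    have sq: "(1 - z)^2 = 1 - 2*z + z^2" for z :: real by (simp add: power2_eq_square algebra_simps)
    have "bb = 1 - 2 * (gam N / real (N - 1))" unfolding bb_def by simp
    then show ?thesis unfolding r_def sq using zero_le_power2[of "gam N / real (N - 1)"] by simp
  qed
  have "(\<integral>y. (Phi N y)^2 \<partial>kernel_pow N a (Suc k) x) \<le> bb * (\<integral>y. (Phi N y)^2 \<partial>kernel_pow N a k x) + 4 * (a + 1) / a * SS N / real (N - 1)"
    unfolding bb_def by (rule second_Phi_step[OF a N x x0])
  also have "\<dots> \<le> bb * (r^(2*k) * (Phi N x)^2 + V) + 4 * (a + 1) / a * SS N / real (N - 1)"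
    using Suc bb0 unfolding r_def V_def by (intro add_right_mono mult_left_mono) auto
  also have "\<dots> = bb * (r^(2*k) * (Phi N x)^2) + V"
  proof -
    have gen: "(1 - 2*g/M)*(X + C/(2*g)) + C/M = (1 - 2*g/M)*X + C/(2*g)" if "M > 0" "g > 0" for M g C X :: real
      using that by (simp add: field_simps)
    show ?thesis unfolding bb_def V_def by (rule gen[OF N1 g])
  qed
  also have "\<dots> \<le> r^2 * (r^(2*k) * (Phi N x)^2) + V"
    using bbr by (intro add_right_mono mult_right_mono) auto
  also have "\<dots> = r^(2 * Suc k) * (Phi N x)^2 + V" by (simp add: power_add power_mult_distrib mult.assoc[symmetric] power2_eq_square)
  finally show ?case unfolding r_def V_def .
qed

definition pk :: "real \<Rightarrow> nat \<Rightarrow> real" where "pk l k = exp (- l) * l ^ k / fact k"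

lemma pk_nonneg: "0 \<le> l \<Longrightarrow> 0 \<le> pk l k"
  unfolding pk_def by simp

lemma poisson_sums: "(\<lambda>k. pk l k * z ^ k) sums exp (- l * (1 - z))"
proof -
  have "(\<lambda>n. exp (- l) * ((l * z) ^ n /\<^sub>R fact n)) sums (exp (- l) * exp (l * z))"
    by (rule sums_mult[OF exp_converges])
  moreover have "(\<lambda>n. exp (- l) * ((l * z) ^ n /\<^sub>R fact n)) = (\<lambda>k. pk l k * z ^ k)"
    by (auto simp: pk_def power_mult_distrib field_simps)
  moreover have "exp (- l) * exp (l * z) = exp (- l * (1 - z))"
    by (simp add: exp_add[symmetric] algebra_simps)
  ultimately show ?thesis by simp
qed

lemma poisson_sums1: "pk l sums 1"
  using poisson_sums[of l 1] by simp

lemma law_at_alt: "law_at N a t x = density (count_space UNIV) (\<lambda>k. ennreal (pk (real (N - 1) * t) k)) \<bind> (\<lambda>k. kernel_pow N a k x)"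
  unfolding law_at_def pk_def ..

lemma law_kernel_meas:
  assumes a: "0 < a" and N: "2 \<le> N" and x: "x \<in> Omega N"
  shows "(\<lambda>k. kernel_pow N a k x) \<in> density (count_space UNIV) f \<rightarrow>\<^sub>M subprob_algebra (state_space N)"
  unfolding measurable_cong_sets[OF sets_density refl] measurable_count_space_eq1
  using kernel_pow_prob[OF a N Omega_space[OF x]]
  by (auto simp: space_prob_algebra space_subprob_algebra intro: prob_space_imp_subprob_space)

lemma law_emeasure:
  assumes a: "0 < a" and N: "2 \<le> N" and x: "x \<in> Omega N" and A: "A \<in> sets (state_space N)"
  shows "emeasure (law_at N a t x) A = (\<Sum>k. ennreal (pk (real (N - 1) * t) k) * emeasure (kernel_pow N a k x) A)"
proof -
  let ?l = "real (N - 1) * t"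
  have "emeasure (law_at N a t x) A = (\<integral>\<^sup>+k. emeasure (kernel_pow N a k x) A \<partial>density (count_space UNIV) (\<lambda>k. ennreal (pk ?l k)))"
    unfolding law_at_alt by (rule emeasure_bind[OF _ law_kernel_meas[OF a N x] A]) simp
  also have "\<dots> = (\<integral>\<^sup>+k. ennreal (pk ?l k) * emeasure (kernel_pow N a k x) A \<partial>count_space UNIV)"
    by (rule nn_integral_density) simp_all
  also have "\<dots> = (\<Sum>k. ennreal (pk ?l k) * emeasure (kernel_pow N a k x) A)"
    by (rule nn_integral_count_space_nat)
  finally show ?thesis .
qed

lemma law_sets:
  assumes a: "0 < a" and N: "2 \<le> N" and x: "x \<in> Omega N"
  shows "sets (law_at N a t x) = sets (state_space N)"
  unfolding law_at_alt
  by (rule sets_bind) (use kernel_pow_facts(2)[OF a N Omega_space[OF x]] in auto)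

lemma law_prob:
  assumes a: "0 < a" and N: "2 \<le> N" and x: "x \<in> Omega N" and t: "0 \<le> t"
  shows "prob_space (law_at N a t x)"
proof
  let ?l = "real (N - 1) * t"
  have l: "0 \<le> ?l" using t by simp
  have sp: "space (law_at N a t x) = space (state_space N)"
    using law_sets[OF a N x] by (rule sets_eq_imp_space_eq)
  have "emeasure (law_at N a t x) (space (law_at N a t x)) = (\<Sum>k. ennreal (pk ?l k) * emeasure (kernel_pow N a k x) (space (state_space N)))"
    unfolding sp by (rule law_emeasure[OF a N x]) simp
  also have "\<dots> = (\<Sum>k. ennreal (pk ?l k))"
  proof -
    have "emeasure (kernel_pow N a k x) (space (state_space N)) = 1" for k
      using prob_space.emeasure_space_1[OF kernel_pow_facts(1)[OF a N Omega_space[OF x]], of k]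
        kernel_pow_facts(3)[OF a N Omega_space[OF x], of k] by simp
    then show ?thesis by simp
  qed
  also have "\<dots> = ennreal 1"
    by (rule suminf_ennreal_eq[OF pk_nonneg[OF l] poisson_sums1])
  finally show "emeasure (law_at N a t x) (space (law_at N a t x)) = 1" by simp
qed

lemma markov_sq:
  assumes P: "prob_space M" and f: "f \<in> borel_measurable M" and I: "integrable M (\<lambda>y. (f y - c)^2)" and w: "0 < w"
  shows "measure M {y \<in> space M. w \<le> \<bar>f y - c\<bar>} \<le> (\<integral>y. (f y - c)^2 \<partial>M) / w^2"
proof -
  interpret prob_space M by (rule P)
  let ?A = "{y \<in> space M. w \<le> \<bar>f y - c\<bar>}"
  have A: "?A \<in> sets M" using f by measurable
  have "measure M ?A = (\<integral>y. indicator ?A y \<partial>M)" using A by simp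
  also have "\<dots> \<le> (\<integral>y. (f y - c)^2 / w^2 \<partial>M)"
  proof (rule integral_mono)
    show "integrable M (indicator ?A :: _ \<Rightarrow> real)" using A by (intro integrable_real_indicator) (auto simp: emeasure_eq_measure)
    show "integrable M (\<lambda>y. (f y - c)^2 / w^2)" using I by simp
    fix y assume y: "y \<in> space M"
    show "indicator ?A y \<le> (f y - c)^2 / w^2"
    proof (cases "y \<in> ?A")
      case True
      then have "w \<le> \<bar>f y - c\<bar>" by simp
      then have "w^2 \<le> \<bar>f y - c\<bar>^2" using w by (intro power_mono) auto
      then have "1 \<le> (f y - c)^2 / w^2" using w by (simp add: power2_abs)
      then show ?thesis using True by simp
    next
      case False then show ?thesis by simp
    qed
  qed
  also have "\<dots> = (\<integral>y. (f y - c)^2 \<partial>M) / w^2" by simp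
  finally show ?thesis .
qed

definition VV :: "real \<Rightarrow> nat \<Rightarrow> real" where "VV a N = 4 * (a + 1) / a * SS N / (2 * gam N)"

lemma VV_nonneg: "0 < a \<Longrightarrow> 2 \<le> N \<Longrightarrow> 0 \<le> VV a N"
  unfolding VV_def SS_def using gam_pos[of N] by (intro divide_nonneg_nonneg mult_nonneg_nonneg sum_nonneg) auto

lemma Ek_sq_bound:
  assumes a: "0 < a" and N: "2 \<le> N" and x: "x \<in> Omega N"
    and x0: "\<And>j. j \<in> {1..N} \<Longrightarrow> gp N x j \<le> 2" and b: "2 * gam N \<le> real (N - 1)"
  shows "(\<integral>y. (Phi N y - c)^2 \<partial>kernel_pow N a k x) \<le> ((1 - gam N / real (N - 1))^k * Phi N x - c)^2 + VV a N"
proof -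
  let ?E = "\<lambda>f :: (nat \<Rightarrow> real) \<Rightarrow> real. (\<integral>y. f y \<partial>kernel_pow N a k x)"
  let ?r = "1 - gam N / real (N - 1)"
  have "?E (\<lambda>y. (Phi N y - c)^2) = ?E (\<lambda>y. 1 * (Phi N y)^2 + (-2*c) * Phi N y + c^2 * 1)"
    by (intro Bochner_Integration.integral_cong refl) (simp add: power2_eq_square algebra_simps)
  also have "\<dots> = 1 * ?E (\<lambda>y. (Phi N y)^2) + (-2*c) * ?E (Phi N) + c^2 * ?E (\<lambda>y. 1)"
    by (rule E_lin3[OF a N x]) (auto intro!: Bnd_power Bnd_Phi)
  also have "?E (\<lambda>y. 1) = 1"
    using kernel_pow_facts(1)[OF a N Omega_space[OF x], of k] by (simp add: prob_space.prob_space)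
  also have "?E (Phi N) = ?r^k * Phi N x" by (rule mean_Phi[OF a N x])
  also have "1 * ?E (\<lambda>y. (Phi N y)^2) + (-2*c) * (?r^k * Phi N x) + c^2 * 1
      \<le> (?r^(2*k) * (Phi N x)^2 + VV a N) + (-2*c) * (?r^k * Phi N x) + c^2 * 1"
    using second_Phi[OF a N x x0 b, of k] unfolding VV_def by simp
  also have "\<dots> = (?r^k * Phi N x - c)^2 + VV a N"
    by (simp add: power2_eq_square power_mult algebra_simps)
  finally show ?thesis .
qed

lemma conc:
  assumes a: "0 < a" and N: "2 \<le> N" and x: "x \<in> Omega N"
    and x0: "\<And>j. j \<in> {1..N} \<Longrightarrow> gp N x j \<le> 2" and b: "2 * gam N \<le> real (N - 1)"
    and t: "0 \<le> t" and w: "0 < w"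
  defines "r \<equiv> 1 - gam N / real (N - 1)"
  defines "l \<equiv> real (N - 1) * t"
  defines "c \<equiv> Phi N x * exp (- l * (1 - r))"
  shows "measure (law_at N a t x) {y \<in> space (state_space N). w \<le> \<bar>Phi N y - c\<bar>}
     \<le> ((Phi N x)^2 * (exp (- l * (1 - r^2)) - (exp (- l * (1 - r)))^2) + VV a N) / w^2"
proof -
  let ?A = "{y \<in> space (state_space N). w \<le> \<bar>Phi N y - c\<bar>}"
  have A: "?A \<in> sets (state_space N)" by measurable
  have l: "0 \<le> l" unfolding l_def using t by simp
  define B where "B k = (r^k * Phi N x - c)^2 + VV a N" for k
  have B0: "0 \<le> B k" for k unfolding B_def using VV_nonneg[OF a N] by simp
  have Pk: "measure (kernel_pow N a k x) ?A \<le> B k / w^2" for k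
  proof -
    have xs: "x \<in> space (state_space N)" using Omega_space[OF x] .
    have sp: "space (kernel_pow N a k x) = space (state_space N)" by (rule kernel_pow_facts(3)[OF a N xs])
    have "measure (kernel_pow N a k x) {y \<in> space (kernel_pow N a k x). w \<le> \<bar>Phi N y - c\<bar>} \<le> (\<integral>y. (Phi N y - c)^2 \<partial>kernel_pow N a k x) / w^2"
    proof (rule markov_sq[OF kernel_pow_facts(1)[OF a N xs] _ _ w])
      show "Phi N \<in> borel_measurable (kernel_pow N a k x)" by (rule meas_kernel_pow[OF a N x Phi_measurable])
      show "integrable (kernel_pow N a k x) (\<lambda>y. (Phi N y - c)^2)"
        by (rule Bnd_integrable[OF a N x]) (intro Bnd_power Bnd_diff Bnd_Phi Bnd_const)
    qed
    also have "\<dots> \<le> B k / w^2" unfolding B_def r_def using w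
      by (intro divide_right_mono Ek_sq_bound[OF a N x x0 b]) auto
    finally show ?thesis unfolding sp .
  qed
  have S: "(\<lambda>k. pk l k * B k / w^2) sums (((Phi N x)^2 * exp (- l * (1 - r^2)) - 2 * c * Phi N x * exp (- l * (1 - r)) + c^2 + VV a N) / w^2)"
  proof -
    have s1: "(\<lambda>k. pk l k * (r^2)^k) sums exp (- l * (1 - r^2))" by (rule poisson_sums)
    have s2: "(\<lambda>k. pk l k * r^k) sums exp (- l * (1 - r))" by (rule poisson_sums)
    have s3: "pk l sums 1" by (rule poisson_sums1)
    have "(\<lambda>k. (Phi N x)^2 * (pk l k * (r^2)^k) - (2 * c * Phi N x) * (pk l k * r^k) + (c^2 + VV a N) * pk l k)
      sums ((Phi N x)^2 * exp (- l * (1 - r^2)) - (2 * c * Phi N x) * exp (- l * (1 - r)) + (c^2 + VV a N) * 1)"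
      by (intro sums_add sums_diff sums_mult s1 s2 s3)
    then have "(\<lambda>k. ((Phi N x)^2 * (pk l k * (r^2)^k) - (2 * c * Phi N x) * (pk l k * r^k) + (c^2 + VV a N) * pk l k) / w^2)
      sums (((Phi N x)^2 * exp (- l * (1 - r^2)) - (2 * c * Phi N x) * exp (- l * (1 - r)) + (c^2 + VV a N) * 1) / w^2)"
      by (rule sums_divide)
    note sA = this
    have e1: "(\<lambda>k. ((Phi N x)^2 * (pk l k * (r^2)^k) - (2 * c * Phi N x) * (pk l k * r^k) + (c^2 + VV a N) * pk l k) / w^2) = (\<lambda>k. pk l k * B k / w^2)"
    proof (rule ext)
      fix k
      show "((Phi N x)^2 * (pk l k * (r^2)^k) - (2 * c * Phi N x) * (pk l k * r^k) + (c^2 + VV a N) * pk l k) / w^2 = pk l k * B k / w^2"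
        unfolding B_def by (rule arg_cong[where f="\<lambda>z. z / w^2"]) (simp add: power2_eq_square power_mult_distrib algebra_simps)
    qed
    have e2: "((Phi N x)^2 * exp (- l * (1 - r^2)) - (2 * c * Phi N x) * exp (- l * (1 - r)) + (c^2 + VV a N) * 1) / w^2
       = ((Phi N x)^2 * exp (- l * (1 - r^2)) - 2 * c * Phi N x * exp (- l * (1 - r)) + c^2 + VV a N) / w^2"
      by (simp add: algebra_simps)
    show ?thesis by (subst e1[symmetric], subst e2[symmetric]) (rule sA)
  qed
  have "emeasure (law_at N a t x) ?A = (\<Sum>k. ennreal (pk l k) * emeasure (kernel_pow N a k x) ?A)"
    unfolding l_def by (rule law_emeasure[OF a N x A])
  also have "\<dots> \<le> (\<Sum>k. ennreal (pk l k * B k / w^2))"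
  proof (rule suminf_le)
    fix k
    interpret prob_space "kernel_pow N a k x" by (rule kernel_pow_facts(1)[OF a N Omega_space[OF x]])
    have "emeasure (kernel_pow N a k x) ?A = ennreal (measure (kernel_pow N a k x) ?A)" by (rule emeasure_eq_measure)
    also have "\<dots> \<le> ennreal (B k / w^2)" using Pk[of k] by (rule ennreal_leI)
    finally have "ennreal (pk l k) * emeasure (kernel_pow N a k x) ?A \<le> ennreal (pk l k) * ennreal (B k / w^2)"
      by (rule mult_left_mono) simp
    also have "\<dots> = ennreal (pk l k * B k / w^2)"
      using pk_nonneg[OF l, of k] B0[of k] w by (simp add: ennreal_mult[symmetric])
    finally show "ennreal (pk l k) * emeasure (kernel_pow N a k x) ?A \<le> ennreal (pk l k * B k / w^2)" .
  qed auto
  also have "\<dots> = ennreal (((Phi N x)^2 * exp (- l * (1 - r^2)) - 2 * c * Phi N x * exp (- l * (1 - r)) + c^2 + VV a N) / w^2)"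
    by (rule suminf_ennreal_eq[OF _ S]) (use pk_nonneg[OF l] B0 w in \<open>auto intro!: divide_nonneg_nonneg mult_nonneg_nonneg\<close>)
  also have "((Phi N x)^2 * exp (- l * (1 - r^2)) - 2 * c * Phi N x * exp (- l * (1 - r)) + c^2 + VV a N)
     = (Phi N x)^2 * (exp (- l * (1 - r^2)) - (exp (- l * (1 - r)))^2) + VV a N"
    unfolding c_def by (simp add: power2_eq_square algebra_simps)
  finally have E: "emeasure (law_at N a t x) ?A \<le> ennreal (((Phi N x)^2 * (exp (- l * (1 - r^2)) - (exp (- l * (1 - r)))^2) + VV a N) / w^2)" .
  interpret L: prob_space "law_at N a t x" by (rule law_prob[OF a N x t])
  have Y0: "0 \<le> ((Phi N x)^2 * exp (- l * (1 - r^2)) - 2 * c * Phi N x * exp (- l * (1 - r)) + c^2 + VV a N) / w^2"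
  proof -
    have "0 \<le> (\<Sum>k. pk l k * B k / w^2)"
      using S pk_nonneg[OF l] B0 by (intro suminf_nonneg) (auto simp: sums_iff intro!: divide_nonneg_nonneg mult_nonneg_nonneg)
    then show ?thesis using S by (simp add: sums_iff)
  qed
  have Y1: "((Phi N x)^2 * exp (- l * (1 - r^2)) - 2 * c * Phi N x * exp (- l * (1 - r)) + c^2 + VV a N)
     = (Phi N x)^2 * (exp (- l * (1 - r^2)) - (exp (- l * (1 - r)))^2) + VV a N"
    unfolding c_def by (simp add: power2_eq_square algebra_simps)
  have "ennreal (measure (law_at N a t x) ?A) \<le> ennreal (((Phi N x)^2 * (exp (- l * (1 - r^2)) - (exp (- l * (1 - r)))^2) + VV a N) / w^2)"
    using E by (simp add: L.emeasure_eq_measure)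
  then show ?thesis using Y0 unfolding Y1 by (simp add: ennreal_le_iff)
qed

section \<open>Trigonometric estimates\<close>

lemma cos_lower: fixes x :: real assumes x: "0 \<le> x" shows "1 - x^2/2 \<le> cos x"
proof -
  let ?f = "\<lambda>x. cos x - 1 + x^2/2"
  have "?f 0 \<le> ?f x"
  proof (rule DERIV_nonneg_imp_nondecreasing[OF x])
    fix u assume u: "0 \<le> u" "u \<le> x"
    have "DERIV ?f u :> (- sin u + u)" by (auto intro!: derivative_eq_intros simp: power2_eq_square)
    moreover have "0 \<le> - sin u + u" using sin_x_le_x[OF u(1)] by simp
    ultimately show "\<exists>y. DERIV ?f u :> y \<and> 0 \<le> y" by blast
  qed
  then show ?thesis by simp
qed

lemma sin_lower: fixes x :: real assumes x: "0 \<le> x" shows "x - x^3/6 \<le> sin x"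
proof -
  let ?f = "\<lambda>x. sin x - x + x^3/6"
  have "?f 0 \<le> ?f x"
  proof (rule DERIV_nonneg_imp_nondecreasing[OF x])
    fix u assume u: "0 \<le> u" "u \<le> x"
    have "DERIV ?f u :> (cos u - 1 + u^2/2)" by (auto intro!: derivative_eq_intros simp: power2_eq_square)
    moreover have "0 \<le> cos u - 1 + u^2/2" using cos_lower[OF u(1)] by simp
    ultimately show "\<exists>y. DERIV ?f u :> y \<and> 0 \<le> y" by blast
  qed
  then show ?thesis by simp
qed

lemma cos_upper: fixes x :: real assumes x: "0 \<le> x" shows "cos x \<le> 1 - x^2/2 + x^4/24"
proof -
  let ?f = "\<lambda>x. 1 - x^2/2 + x^4/24 - cos x"
  have "?f 0 \<le> ?f x"
  proof (rule DERIV_nonneg_imp_nondecreasing[OF x])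
    fix u assume u: "0 \<le> u" "u \<le> x"
    have "DERIV ?f u :> (- u + u^3/6 + sin u)"
      by (auto intro!: derivative_eq_intros simp: power2_eq_square power3_eq_cube eval_nat_numeral)
    moreover have "0 \<le> - u + u^3/6 + sin u" using sin_lower[OF u(1)] by simp
    ultimately show "\<exists>y. DERIV ?f u :> y \<and> 0 \<le> y" by blast
  qed
  then show ?thesis by simp
qed

lemma gam_upper: assumes N: "2 \<le> N" shows "gam N \<le> pi^2 / (2 * (real N)^2)"
proof -
  have "1 - (pi / real N)^2/2 \<le> cos (pi / real N)" by (rule cos_lower) simp
  then show ?thesis unfolding gam_def by (simp add: power_divide)
qed

lemma gam_lower: assumes N: "2 \<le> N" shows "pi^2 / (3 * (real N)^2) \<le> gam N"
proof -
  define x where "x = pi / real N"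
  have x0: "0 \<le> x" unfolding x_def by simp
  have x2: "x \<le> 2"
  proof -
    have "x \<le> pi / 2" unfolding x_def using N by (intro divide_left_mono) auto
    then show ?thesis using pi_less_4 by simp
  qed
  have "x^4 \<le> 4 * x^2"
  proof -
    have "x^2 \<le> 2^2" using x0 x2 by (intro power_mono) auto
    then have "x^2 * x^2 \<le> 4 * x^2" by (intro mult_right_mono) auto
    then show ?thesis by (simp add: power2_eq_square eval_nat_numeral mult.assoc)
  qed
  then have "x^2/3 \<le> 1 - cos x" using cos_upper[OF x0] by simp
  then show ?thesis unfolding gam_def x_def by (simp add: power_divide)
qed

lemma cos_sum_telescope:
  "2 * sin (x/2) * (\<Sum>i<n. cos (real i * x)) = sin ((2 * real n - 1) * x / 2) + sin (x / 2)"
proof (induction n)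
  case 0
  have "sin (- x / 2) = - sin (x / 2)" by (simp add: minus_divide_left[symmetric])
  then show ?case by simp
next
  case (Suc n)
  have pts: "2 * sin (x/2) * cos (real n * x) = sin ((2 * real n + 1) * x / 2) - sin ((2 * real n - 1) * x / 2)"
  proof -
    have e1: "(2 * real n + 1) * x / 2 = real n * x + x/2" by (simp add: field_simps)
    have e2: "(2 * real n - 1) * x / 2 = real n * x - x/2" by (simp add: field_simps)
    show ?thesis unfolding e1 e2 sin_add sin_diff by simp
  qed
  have "2 * sin (x/2) * (\<Sum>i<Suc n. cos (real i * x)) = 2 * sin (x/2) * (\<Sum>i<n. cos (real i * x)) + 2 * sin (x/2) * cos (real n * x)"
    by (simp add: algebra_simps)
  also have "\<dots> = sin ((2 * real (Suc n) - 1) * x / 2) + sin (x / 2)"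
    unfolding Suc pts by (simp add: algebra_simps)
  finally show ?case .
qed

lemma cos_roots_sum: assumes N: "2 \<le> N" shows "(\<Sum>i<N. cos (real i * (2 * pi / real N))) = 0"
proof -
  define x where "x = 2 * pi / real N"
  have hx: "x / 2 = pi / real N" unfolding x_def by simp
  have s0: "0 < sin (pi / real N)"
    using N by (intro sin_gt_zero) (auto simp: field_simps)
  have eq: "(2 * real N - 1) * x / 2 = 2 * pi - pi / real N" unfolding x_def using N by (simp add: field_simps)
  have "sin ((2 * real N - 1) * x / 2) = sin (2 * pi - pi / real N)" by (rule arg_cong[where f=sin, OF eq])
  also have "\<dots> = - sin (pi / real N)" by (simp add: sin_diff)
  finally have sN: "sin ((2 * real N - 1) * x / 2) = - sin (pi / real N)" .
  have "2 * sin (x/2) * (\<Sum>i<N. cos (real i * x)) = 0" using cos_sum_telescope[of x N] sN hx by simp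
  then show ?thesis using s0 unfolding hx x_def by simp
qed

lemma SS_eq: assumes N: "2 \<le> N" shows "SS N = real N / 2"
proof -
  have "(\<Sum>i<N. (sn N i)^2) = (sn N 0)^2 + (\<Sum>i\<in>{1..<N}. (sn N i)^2)"
    using sum.atLeast_Suc_lessThan[of 0 N "\<lambda>i. (sn N i)^2"] N by (simp add: atLeast0LessThan)
  then have "SS N = (\<Sum>i<N. (sn N i)^2)" unfolding SS_def by simp
  also have "\<dots> = (\<Sum>i<N. (1 - cos (real i * (2 * pi / real N))) / 2)"
  proof (intro sum.cong refl)
    fix i
    have e: "real i * (2 * pi / real N) = 2 * (pi * real i / real N)" by simp
    have "cos (real i * (2 * pi / real N)) = 1 - 2 * (sin (pi * real i / real N))^2"
      unfolding e by (rule cos_double_sin)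
    then show "(sn N i)^2 = (1 - cos (real i * (2 * pi / real N))) / 2" unfolding sn_def by simp
  qed
  also have "\<dots> = (real N - (\<Sum>i<N. cos (real i * (2 * pi / real N)))) / 2"
    by (simp add: sum_divide_distrib[symmetric] sum_subtractf)
  also have "\<dots> = real N / 2" using cos_roots_sum[OF N] by simp
  finally show ?thesis .
qed

section \<open>Starting configurations\<close>

definition xs :: "nat \<Rightarrow> real \<Rightarrow> nat \<Rightarrow> real" where
  "xs N th = (\<lambda>i\<in>{1..<N}. real i + th * (real N / pi) * sn N i)"

lemma xb_xs: assumes N: "1 \<le> N" and j: "j \<le> N" shows "xb N (xs N th) j = real j + th * (real N / pi) * sn N j"
  using N j by (auto simp: xb_def xs_def sn_def)

lemma sn_diff: assumes N: "1 \<le> N" and j: "1 \<le> j" shows "\<bar>sn N j - sn N (j - 1)\<bar> \<le> pi / real N"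
proof -
  have e: "pi * real j / real N - pi * real (j - 1) / real N = pi / real N"
    using j N by (simp add: of_nat_diff field_simps)
  have "\<bar>sn N j - sn N (j - 1)\<bar> = \<bar>2 * sin ((pi * real j / real N - pi * real (j - 1) / real N) / 2) * cos ((pi * real j / real N + pi * real (j - 1) / real N) / 2)\<bar>"
    unfolding sn_def sin_diff_sin ..
  also have "\<dots> \<le> \<bar>2 * sin ((pi / real N) / 2)\<bar> * 1"
    unfolding e abs_mult by (intro mult_left_mono) auto
  also have "\<dots> \<le> 2 * \<bar>(pi / real N) / 2\<bar>"
    using abs_sin_x_le_abs_x[of "(pi / real N) / 2"] by (simp add: abs_mult)
  also have "\<dots> = pi / real N" by simp
  finally show ?thesis .
qed

lemma gp_xs:
  assumes N: "1 \<le> N" and j: "j \<in> {1..N}" and th: "0 \<le> th" "th \<le> 1"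
  shows "0 \<le> gp N (xs N th) j" "gp N (xs N th) j \<le> 2"
proof -
  have g: "gp N (xs N th) j = 1 + th * (real N / pi) * (sn N j - sn N (j - 1))"
  proof -
    have h1: "xb N (xs N th) j = real j + th * (real N / pi) * sn N j" using j N by (intro xb_xs) auto
    have h2: "xb N (xs N th) (j - 1) = real (j - 1) + th * (real N / pi) * sn N (j - 1)" using j N by (intro xb_xs) auto
    have h3: "real (j - 1) = real j - 1" using j by (simp add: of_nat_diff)
    show ?thesis unfolding gp_def h1 h2 h3 by (simp add: algebra_simps)
  qed
  have "\<bar>th * (real N / pi) * (sn N j - sn N (j - 1))\<bar> \<le> 1 * (real N / pi) * (pi / real N)"
    unfolding abs_mult using th sn_diff[OF N, of j] j by (intro mult_mono) auto
  also have "\<dots> = 1" using N by simp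
  finally have "\<bar>th * (real N / pi) * (sn N j - sn N (j - 1))\<bar> \<le> 1" .
  then have "- 1 \<le> th * (real N / pi) * (sn N j - sn N (j - 1))" "th * (real N / pi) * (sn N j - sn N (j - 1)) \<le> 1"
    unfolding abs_le_iff by linarith+
  then show "0 \<le> gp N (xs N th) j" "gp N (xs N th) j \<le> 2" unfolding g by linarith+
qed

lemma xs_Omega:
  assumes N: "1 \<le> N" and th: "0 \<le> th" "th \<le> 1"
  shows "xs N th \<in> Omega N"
  unfolding Omega_def
proof (intro CollectI conjI ballI)
  show "xs N th \<in> space (state_space N)" by (simp add: space_SS xs_def)
  fix i assume i: "i \<in> {1..N}"
  show "xb N (xs N th) (i - 1) \<le> xb N (xs N th) i"
    using gp_xs(1)[OF N i th] unfolding gp_def by simp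
qed

lemma Phi_xs: assumes N: "1 \<le> N" shows "Phi N (xs N th) = th * (real N / pi) * SS N"
proof -
  have "Phi N (xs N th) = (\<Sum>i\<in>{1..<N}. th * (real N / pi) * (sn N i)^2)"
    unfolding Phi_def using N by (intro sum.cong refl) (simp add: xb_xs power2_eq_square)
  then show ?thesis unfolding SS_def by (simp add: sum_distrib_left)
qed

lemma pi_weight_measurable[measurable]: "pi_weight N a \<in> borel_measurable (state_space N)"
  unfolding pi_weight_def by measurable

lemma pi_sets: "sets (pi_measure N a) = sets (state_space N)"
  by (simp add: pi_measure_def)

lemma pi_space: "space (pi_measure N a) = space (state_space N)"
  by (simp add: pi_measure_def)

lemma pi_total: "emeasure (pi_measure N a) (space (pi_measure N a)) \<le> 1"
proof -
  define Z where "Z = (\<integral>\<^sup>+ y. pi_weight N a y \<partial>state_space N)"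
  have "emeasure (pi_measure N a) (space (pi_measure N a)) = (\<integral>\<^sup>+ y. pi_weight N a y / Z \<partial>state_space N)"
    unfolding pi_measure_def Z_def[symmetric] by (simp add: emeasure_density)
  also have "\<dots> = Z / Z" unfolding Z_def by (rule nn_integral_divide) measurable
  also have "\<dots> \<le> 1"
  proof (cases "Z = 0 \<or> Z = top")
    case True then show ?thesis by (auto simp: divide_ennreal_def)
  next
    case False then show ?thesis by (simp add: top.not_eq_extremum)
  qed
  finally show ?thesis .
qed

lemma pi_finite: "finite_measure (pi_measure N a)"
  using pi_total[of N a] by (intro finite_measureI) (auto simp: top_unique)

lemma pi_measure_le1: "measure (pi_measure N a) A \<le> 1"
proof -
  interpret finite_measure "pi_measure N a" by (rule pi_finite)
  have "measure (pi_measure N a) A \<le> measure (pi_measure N a) (space (pi_measure N a))"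
    by (cases "A \<in> sets (pi_measure N a)") (auto intro: bounded_measure simp: measure_notin_sets)
  also have "\<dots> \<le> 1" using pi_total[of N a] by (simp add: emeasure_eq_measure ennreal_le_1)
  finally show ?thesis .
qed

section \<open>Total variation\<close>

lemma tv_lower:
  assumes P: "prob_space M" and A: "A \<in> sets M"
    and M': "\<And>B. measure M' B \<le> 1"
  shows "measure M A - measure M' A \<le> tv_dist M M'"
  unfolding tv_dist_def
proof (rule order_trans[OF _ cSUP_upper[OF A]])
  show "measure M A - measure M' A \<le> \<bar>measure M A - measure M' A\<bar>" by simp
  show "bdd_above ((\<lambda>A. \<bar>measure M A - measure M' A\<bar>) ` sets M)"
  proof (rule bdd_aboveI2)
    fix B
    have "measure M B \<le> 1" using prob_space.prob_le_1[OF P] .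
    then show "\<bar>measure M B - measure M' B\<bar> \<le> 1" using M'[of B] measure_nonneg[of M B] measure_nonneg[of M' B] unfolding abs_le_iff by linarith
  qed
qed

lemma tv_le1:
  assumes P: "prob_space M" and M': "\<And>B. measure M' B \<le> 1"
  shows "tv_dist M M' \<le> 1"
  unfolding tv_dist_def
proof (rule cSUP_least)
  show "sets M \<noteq> {}" using sets.empty_sets by blast
  fix B
  have "measure M B \<le> 1" using prob_space.prob_le_1[OF P] .
  then show "\<bar>measure M B - measure M' B\<bar> \<le> 1" using M'[of B] measure_nonneg[of M B] measure_nonneg[of M' B] unfolding abs_le_iff by linarith
qed

lemma E2_ge:
  fixes l r :: real assumes l: "0 \<le> l"
  shows "(exp (- l * (1 - r)))^2 \<le> exp (- l * (1 - r^2))"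
proof -
  have "(exp (- l * (1 - r)))^2 = exp (2 * (- l * (1 - r)))" by (simp add: exp_double[symmetric])
  also have "\<dots> \<le> exp (- l * (1 - r^2))"
  proof -
    have "0 \<le> l * (1 - r)^2" using l by simp
    then have "2 * (- l * (1 - r)) \<le> - l * (1 - r^2)" by (simp add: power2_eq_square algebra_simps)
    then show ?thesis by simp
  qed
  finally show ?thesis .
qed

lemma sup_ge:
  fixes eps :: real
  assumes a: "0 < a" and N: "3 \<le> N" and t: "0 \<le> t" and m: "1 \<le> m" and me: "1 \<le> real m * eps / 2"
  defines "r \<equiv> 1 - gam N / real (N - 1)"
  defines "l \<equiv> real (N - 1) * t"
  defines "E1 \<equiv> exp (- l * (1 - r))"
  defines "E2 \<equiv> exp (- l * (1 - r^2))"
  defines "K \<equiv> real N / pi * SS N"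
  defines "w \<equiv> K * E1 / (2 * real m)"
  assumes Hq: "(K^2 * (E2 - E1^2) + VV a N) / w^2 \<le> eps / 2"
  shows "\<not> ((SUP x\<in>Omega N. tv_dist (law_at N a t x) (pi_measure N a)) < 1 - eps)"
proof
  assume sup: "(SUP x\<in>Omega N. tv_dist (law_at N a t x) (pi_measure N a)) < 1 - eps"
  have N2: "2 \<le> N" and N1: "1 \<le> N" using N by auto
  have b: "2 * gam N \<le> real (N - 1)" using gam_pos[OF N2] N by simp
  have l0: "0 \<le> l" unfolding l_def using t by simp
  have K0: "0 < K" unfolding K_def SS_eq[OF N2] using N by simp
  have E10: "0 < E1" unfolding E1_def by simp
  have w0: "0 < w" unfolding w_def using K0 E10 m by simp
  have E21: "0 \<le> E2 - E1^2" using E2_ge[OF l0, of r] unfolding E1_def E2_def by simp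
  define th where "th j = real j / real m" for j :: nat
  define c where "c j = Phi N (xs N (th j)) * E1" for j
  define A where "A j = {y \<in> space (state_space N). \<bar>Phi N y - c j\<bar> < w}" for j
  have th01: "0 \<le> th j" "th j \<le> 1" if "j \<in> {1..m}" for j using that m unfolding th_def by auto
  have cj: "c j = th j * K * E1" for j unfolding c_def Phi_xs[OF N1] K_def by simp
  have Asets: "A j \<in> sets (state_space N)" for j unfolding A_def by measurable
  have tvb: "\<And>B. measure (pi_measure N a) B \<le> 1" by (rule pi_measure_le1)
  have piA: "eps / 2 < measure (pi_measure N a) (A j)" if j: "j \<in> {1..m}" for j
  proof -
    let ?x = "xs N (th j)"
    have xO: "?x \<in> Omega N" using xs_Omega[OF N1 th01[OF j]] .
    have x0: "\<And>i. i \<in> {1..N} \<Longrightarrow> gp N ?x i \<le> 2" using gp_xs(2)[OF N1 _ th01[OF j]] .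
    interpret L: prob_space "law_at N a t ?x" by (rule law_prob[OF a N2 xO t])
    have sl: "space (law_at N a t ?x) = space (state_space N)"
      by (rule sets_eq_imp_space_eq[OF law_sets[OF a N2 xO]])
    define bad where "bad = {y \<in> space (state_space N). w \<le> \<bar>Phi N y - c j\<bar>}"
    have badm: "measure (law_at N a t ?x) bad \<le> ((Phi N ?x)^2 * (E2 - E1^2) + VV a N) / w^2"
      unfolding bad_def c_def E1_def E2_def l_def r_def by (rule conc[OF a N2 xO x0 b t w0])
    also have "\<dots> \<le> (K^2 * (E2 - E1^2) + VV a N) / w^2"
    proof -
      have px: "Phi N ?x = th j * K" unfolding Phi_xs[OF N1] K_def by simp
      have "\<bar>Phi N ?x\<bar> \<le> K" unfolding px using th01[OF j] K0
        by (simp add: abs_mult mult_left_le_one_le)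
      then have "(Phi N ?x)^2 \<le> K^2" by (metis abs_le_square_iff abs_of_pos K0)
      then show ?thesis using E21 w0 by (intro divide_right_mono add_right_mono mult_right_mono) auto
    qed
    also have "\<dots> \<le> eps / 2" by (rule Hq)
    finally have bad_le: "measure (law_at N a t ?x) bad \<le> eps / 2" .
    have Aeq: "A j = space (law_at N a t ?x) - bad" unfolding A_def bad_def sl by auto
    have bads: "bad \<in> L.events" unfolding bad_def using law_sets[OF a N2 xO] by simp
    have "measure (law_at N a t ?x) (A j) = 1 - measure (law_at N a t ?x) bad"
      unfolding Aeq by (rule L.prob_compl[OF bads])
    then have lawA: "1 - eps / 2 \<le> measure (law_at N a t ?x) (A j)" using bad_le by simp
    have "measure (law_at N a t ?x) (A j) - measure (pi_measure N a) (A j) \<le> tv_dist (law_at N a t ?x) (pi_measure N a)"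
      by (rule tv_lower[OF law_prob[OF a N2 xO t] _ tvb]) (simp add: law_sets[OF a N2 xO] Asets)
    also have "\<dots> \<le> (SUP x\<in>Omega N. tv_dist (law_at N a t x) (pi_measure N a))"
    proof (rule cSUP_upper[OF xO])
      show "bdd_above ((\<lambda>x. tv_dist (law_at N a t x) (pi_measure N a)) ` Omega N)"
        by (rule bdd_aboveI2[where M=1]) (rule tv_le1[OF law_prob[OF a N2 _ t] tvb])
    qed
    finally show ?thesis using sup lawA by linarith
  qed
  interpret P: finite_measure "pi_measure N a" by (rule pi_finite)
  have disj: "disjoint_family_on A {1..m}"
    unfolding disjoint_family_on_def
  proof (intro ballI impI)
    fix i j assume i: "i \<in> {1..m}" and j: "j \<in> {1..m}" and ij: "i \<noteq> j"
    have sep: "2 * w \<le> \<bar>c i - c j\<bar>"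
    proof -
      have "\<bar>c i - c j\<bar> = \<bar>real i - real j\<bar> / real m * (K * E1)" unfolding cj th_def using K0 E10
        by (simp add: abs_mult diff_divide_distrib[symmetric] left_diff_distrib[symmetric] mult.assoc)
      moreover have "1 \<le> \<bar>real i - real j\<bar>" using ij by linarith
      ultimately have "1 / real m * (K * E1) \<le> \<bar>c i - c j\<bar>" using K0 E10 m
        by (simp add: divide_right_mono mult_right_mono)
      then show ?thesis unfolding w_def by simp
    qed
    show "A i \<inter> A j = {}"
    proof (rule ccontr)
      assume "A i \<inter> A j \<noteq> {}"
      then obtain y where "\<bar>Phi N y - c i\<bar> < w" "\<bar>Phi N y - c j\<bar> < w" unfolding A_def by auto
      then have "\<bar>c i - c j\<bar> < 2 * w" by linarith
      then show False using sep by linarith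
    qed
  qed
  have "real m * (eps / 2) = (\<Sum>j\<in>{1..m}. eps / 2)" by simp
  also have "\<dots> < (\<Sum>j\<in>{1..m}. measure (pi_measure N a) (A j))"
    using m by (intro sum_strict_mono piA) auto
  also have "\<dots> = measure (pi_measure N a) (\<Union>j\<in>{1..m}. A j)"
    by (rule P.finite_measure_finite_Union[symmetric]) (use disj Asets pi_sets in auto)
  also have "\<dots> \<le> 1" by (rule pi_measure_le1)
  finally show False using me by simp
qed

lemma Hq_holds:
  fixes eps C1 :: real
  assumes a: "0 < a" and N: "3 \<le> N" and m: "1 \<le> m" and eps: "0 < eps"
    and NN: "8 * (real m)^2 * pi^2 / eps \<le> (real N)^2"
    and C1: "0 \<le> C1" and C1e: "12 * (real m)^2 * (4 * (a + 1) / a) * exp (- 2 * C1) \<le> eps / 4"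
    and t: "0 \<le> t" and tT: "t \<le> (ln (real N) / 2 - C1) / gam N"
  defines "r \<equiv> 1 - gam N / real (N - 1)"
  defines "l \<equiv> real (N - 1) * t"
  defines "E1 \<equiv> exp (- l * (1 - r))"
  defines "E2 \<equiv> exp (- l * (1 - r^2))"
  defines "K \<equiv> real N / pi * SS N"
  defines "w \<equiv> K * E1 / (2 * real m)"
  shows "(K^2 * (E2 - E1^2) + VV a N) / w^2 \<le> eps / 2"
proof -
  have N2: "2 \<le> N" using N by simp
  define g where "g = gam N"
  define M where "M = real (N - 1)"
  define z where "z = g^2 * t / M"
  define D0 where "D0 = 4 * (a + 1) / a"
  have g0: "0 < g" unfolding g_def using gam_pos[OF N2] by simp
  have gU: "g \<le> pi^2 / (2 * (real N)^2)" unfolding g_def by (rule gam_upper[OF N2])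
  have gL: "pi^2 / (3 * (real N)^2) \<le> g" unfolding g_def by (rule gam_lower[OF N2])
  have M0: "0 < M" "M = real N - 1" unfolding M_def using N by (auto simp: of_nat_diff)
  have D00: "0 < D0" unfolding D0_def using a by simp
  have Npos: "0 < real N" using N by simp
  have SSv: "SS N = real N / 2" by (rule SS_eq[OF N2])
  have Kv: "K = (real N)^2 / (2 * pi)" unfolding K_def SSv by (simp add: power2_eq_square)
  have K0: "0 < K" unfolding Kv using Npos by simp
  have genl1: "M' * t * (1 - (1 - g' / M')) = g' * t" if "M' > 0" for M' g' :: real
    using that by (simp add: field_simps)
  have genl2: "M' * t * (1 - (1 - g' / M')^2) = 2 * (g' * t) - g'^2 * t / M'" if "M' > 0" for M' g' :: real
    using that by (simp add: field_simps power2_eq_square)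
  have lr: "l * (1 - r) = g * t" unfolding l_def r_def g_def[symmetric] M_def[symmetric] by (rule genl1[OF M0(1)])
  have lr2: "l * (1 - r^2) = 2 * (g * t) - z" unfolding l_def r_def z_def g_def[symmetric] M_def[symmetric] by (rule genl2[OF M0(1)])
  have E1v: "E1 = exp (- (g * t))" unfolding E1_def using lr by (simp add: mult.commute[of l] minus_mult_left[symmetric])
  have E10: "0 < E1" unfolding E1_def by simp
  have E2v: "E2 = E1^2 * exp z"
  proof -
    have "E2 = exp (- (l * (1 - r^2)))" unfolding E2_def by simp
    also have "\<dots> = exp (2 * (- (g * t)) + z)" unfolding lr2 by simp
    also have "\<dots> = E1^2 * exp z" unfolding E1v power2_eq_square exp_add[symmetric] by (simp add: algebra_simps)
    finally show ?thesis .
  qed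
  have tle: "t \<le> ln (real N) / (2 * g)"
  proof -
    have "t \<le> (ln (real N) / 2 - C1) / g" using tT unfolding g_def .
    also have "\<dots> \<le> (ln (real N) / 2) / g" using C1 g0 by (intro divide_right_mono) auto
    finally show ?thesis by simp
  qed
  have lnN: "ln (real N) \<le> M" unfolding M0(2) using ln_le_minus_one[OF Npos] .
  have z0: "0 \<le> z" unfolding z_def using t M0 by simp
  have zU: "z \<le> pi^2 / (4 * (real N)^2)"
  proof -
    have "z = g * (g * t) / M" unfolding z_def by (simp add: power2_eq_square)
    also have "\<dots> \<le> g * (ln (real N) / 2) / M"
    proof -
      have "g * t \<le> ln (real N) / 2" using tle g0 by (simp add: field_simps)
      then show ?thesis using g0 M0 by (intro divide_right_mono mult_left_mono) auto
    qed
    also have "\<dots> \<le> g * (M / 2) / M" using lnN g0 M0 by (intro divide_right_mono mult_left_mono) auto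
    also have "\<dots> = g / 2" using M0(1) by simp
    also have "\<dots> \<le> pi^2 / (4 * (real N)^2)" using gU by simp
    finally show ?thesis .
  qed
  have zhalf: "z \<le> 1/2"
  proof -
    have "pi^2 \<le> 4^2" using pi_less_4 pi_gt_zero by (intro power_mono) auto
    moreover have "(3::real)^2 \<le> (real N)^2" using N by (intro power_mono) auto
    ultimately have "pi^2 / (4 * (real N)^2) \<le> 16 / (4 * 9)"
      by (intro frac_le) (auto simp: power2_eq_square)
    then show ?thesis using zU by simp
  qed
  have ez: "exp z - 1 \<le> 2 * z" using exp_bound_lemma[of z] zhalf z0 by simp
  have T1: "4 * (real m)^2 * (exp z - 1) \<le> eps / 4"
  proof -
    have "4 * (real m)^2 * (exp z - 1) \<le> 4 * (real m)^2 * (2 * (pi^2 / (4 * (real N)^2)))"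
      using ez zU by (intro mult_left_mono) auto
    also have "\<dots> = 2 * (real m)^2 * pi^2 / (real N)^2" by simp
    also have "\<dots> \<le> eps / 4"
    proof -
      have "8 * (real m)^2 * pi^2 \<le> eps * (real N)^2" using NN eps by (simp add: field_simps)
      then show ?thesis using Npos by (simp add: field_simps)
    qed
    finally show ?thesis .
  qed
  have VVv: "VV a N = D0 * real N / (4 * g)" unfolding VV_def D0_def g_def SSv by simp
  have eg: "exp (2 * (g * t)) \<le> real N * exp (- 2 * C1)"
  proof -
    have "2 * (g * t) \<le> ln (real N) - 2 * C1"
    proof -
      have "g * t \<le> ln (real N) / 2 - C1" using tT g0 unfolding g_def[symmetric] by (simp add: field_simps)
      then show ?thesis by simp
    qed
    then have "exp (2 * (g * t)) \<le> exp (ln (real N) - 2 * C1)" by simp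
    also have "\<dots> = real N * exp (- 2 * C1)" using Npos by (simp add: exp_diff exp_minus divide_inverse)
    finally show ?thesis .
  qed
  have T2: "4 * (real m)^2 * VV a N / (K^2 * E1^2) \<le> eps / 4"
  proof -
    have inv: "1 / E1^2 = exp (2 * (g * t))" unfolding E1v by (simp add: exp_minus power2_eq_square exp_add[symmetric] field_simps)
    have "4 * (real m)^2 * VV a N / (K^2 * E1^2) = 4 * (real m)^2 * (D0 * real N / (4 * g)) / K^2 * (1 / E1^2)"
      unfolding VVv by simp
    also have "\<dots> = (real m)^2 * D0 * (4 * pi^2) / (g * (real N)^3) * exp (2 * (g * t))"
      unfolding inv Kv using Npos g0 by (simp add: field_simps power2_eq_square power3_eq_cube)
    also have "\<dots> \<le> (real m)^2 * D0 * (4 * pi^2) / ((pi^2 / (3 * (real N)^2)) * (real N)^3) * (real N * exp (- 2 * C1))"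
    proof (rule mult_mono[OF _ eg])
      have p1: "0 < pi^2 / (3 * (real N)^2) * (real N)^3" using Npos by simp
      have p2: "pi^2 / (3 * (real N)^2) * (real N)^3 \<le> g * (real N)^3" using gL Npos by (intro mult_right_mono) auto
      show "(real m)^2 * D0 * (4 * pi^2) / (g * (real N)^3) \<le> (real m)^2 * D0 * (4 * pi^2) / ((pi^2 / (3 * (real N)^2)) * (real N)^3)"
      proof (rule divide_left_mono[OF p2])
        show "0 \<le> (real m)^2 * D0 * (4 * pi^2)" using D00 by simp
        have p3: "0 < g * (real N)^3" using g0 Npos by simp
        show "0 < g * (real N)^3 * (pi^2 / (3 * (real N)^2) * (real N)^3)" by (rule mult_pos_pos[OF p3 p1])
      qed
      show "0 \<le> (real m)^2 * D0 * (4 * pi^2) / ((pi^2 / (3 * (real N)^2)) * (real N)^3)"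
        using D00 Npos by simp
    qed simp
    also have "\<dots> = 12 * (real m)^2 * D0 * exp (- 2 * C1)"
      using Npos by (simp add: field_simps power2_eq_square power3_eq_cube)
    also have "\<dots> \<le> eps / 4" using C1e unfolding D0_def by simp
    finally show ?thesis .
  qed
  have "(K^2 * (E2 - E1^2) + VV a N) / w^2 = 4 * (real m)^2 * (exp z - 1) + 4 * (real m)^2 * VV a N / (K^2 * E1^2)"
    unfolding w_def E2v using K0 E10 m by (simp add: field_simps power2_eq_square)
  also have "\<dots> \<le> eps / 4 + eps / 4" using T1 T2 by linarith
  finally show ?thesis by simp
qed

lemma mt_nonneg: "0 \<le> mixing_time N a e"
  unfolding mixing_time_def by (rule Inf_greatest) auto

lemma mt_lower:
  fixes eps :: real
  assumes a: "0 < a" and N: "3 \<le> N" and m: "1 \<le> m" and eps: "0 < eps" and me: "1 \<le> real m * eps / 2"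
    and NN: "8 * (real m)^2 * pi^2 / eps \<le> (real N)^2"
    and C1: "0 \<le> C1" and C1e: "12 * (real m)^2 * (4 * (a + 1) / a) * exp (- 2 * C1) \<le> eps / 4"
  shows "ereal ((ln (real N) / 2 - C1) / gam N) \<le> mixing_time N a (1 - eps)"
  unfolding mixing_time_def
proof (rule Inf_greatest)
  fix y assume "y \<in> ereal ` {t. 0 \<le> t \<and> (SUP x\<in>Omega N. tv_dist (law_at N a t x) (pi_measure N a)) < 1 - eps}"
  then obtain t where y: "y = ereal t" and t: "0 \<le> t" and sup: "(SUP x\<in>Omega N. tv_dist (law_at N a t x) (pi_measure N a)) < 1 - eps"
    by auto
  show "ereal ((ln (real N) / 2 - C1) / gam N) \<le> y"
  proof (rule ccontr)
    assume "\<not> ereal ((ln (real N) / 2 - C1) / gam N) \<le> y"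
    then have tT: "t \<le> (ln (real N) / 2 - C1) / gam N" unfolding y by simp
    have "\<not> ((SUP x\<in>Omega N. tv_dist (law_at N a t x) (pi_measure N a)) < 1 - eps)"
      by (rule sup_ge[OF a N t m me Hq_holds[OF a N m eps NN C1 C1e t tT]])
    then show False using sup by simp
  qed
qed

theorem proposition3p1:
  fixes \<alpha> \<epsilon> :: real
  assumes "\<alpha> > 0" and "0 < \<epsilon>" and "\<epsilon> < 1"
  shows "\<exists>C > 0. \<forall>N::nat. N \<ge> 2 \<longrightarrow>
    mixing_time N \<alpha> (1 - \<epsilon>) \<ge> ereal ((real N)\<^sup>2 / pi\<^sup>2 * (ln (real N) - C))"
proof -
  have a: "0 < \<alpha>" and eps: "0 < \<epsilon>" using assms by auto
  define m where "m = nat \<lceil>2 / \<epsilon>\<rceil>"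
  have m2: "2 / \<epsilon> \<le> real m" unfolding m_def by linarith
  have me: "1 \<le> real m * \<epsilon> / 2" using m2 eps by (simp add: field_simps)
  have m: "1 \<le> m"
  proof -
    have "2 \<le> 2 / \<epsilon>" using assms by (simp add: field_simps)
    then show ?thesis using m2 by linarith
  qed
  define D0 where "D0 = 4 * (\<alpha> + 1) / \<alpha>"
  have D00: "0 < D0" unfolding D0_def using a by simp
  define X where "X = 48 * (real m)^2 * D0 / \<epsilon>"
  have X0: "0 < X" unfolding X_def using D00 eps m by simp
  define C1 where "C1 = max 0 (ln X / 2)"
  have C10: "0 \<le> C1" unfolding C1_def by simp
  have C1e: "12 * (real m)^2 * (4 * (\<alpha> + 1) / \<alpha>) * exp (- 2 * C1) \<le> \<epsilon> / 4"
  proof -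
    have "exp (- 2 * C1) \<le> exp (- ln X)" unfolding C1_def by simp
    also have "\<dots> = 1 / X" using X0 by (simp add: exp_minus inverse_eq_divide)
    finally have "12 * (real m)^2 * D0 * exp (- 2 * C1) \<le> 12 * (real m)^2 * D0 * (1 / X)"
      using D00 by (intro mult_left_mono) auto
    also have "\<dots> = \<epsilon> / 4" unfolding X_def using D00 eps m by (simp add: field_simps)
    finally show ?thesis unfolding D0_def .
  qed
  define N0 where "N0 = nat \<lceil>8 * (real m)^2 * pi^2 / \<epsilon>\<rceil> + 3"
  define C where "C = max (2 * C1) (ln (real N0)) + 1"
  have C0: "0 < C" unfolding C_def using C10 by (simp add: max_def)
  have main: "ereal ((real N)\<^sup>2 / pi\<^sup>2 * (ln (real N) - C)) \<le> mixing_time N \<alpha> (1 - \<epsilon>)" if N2: "2 \<le> N" for N :: nat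
  proof (cases "N < N0")
    case True
    have "ln (real N) \<le> ln (real N0)" using True N2 by simp
    then have "ln (real N) - C < 0" unfolding C_def by simp
    then have "(real N)\<^sup>2 / pi\<^sup>2 * (ln (real N) - C) \<le> 0" by (intro mult_nonneg_nonpos) auto
    then have "ereal ((real N)\<^sup>2 / pi\<^sup>2 * (ln (real N) - C)) \<le> ereal 0" by simp
    then show ?thesis using mt_nonneg[of N \<alpha> "1 - \<epsilon>"] zero_ereal_def by (metis order_trans)
  next
    case False
    then have N: "3 \<le> N" unfolding N0_def by simp
    have NN: "8 * (real m)^2 * pi^2 / \<epsilon> \<le> (real N)^2"
    proof -
      have "8 * (real m)^2 * pi^2 / \<epsilon> \<le> real N" using False unfolding N0_def by linarith
      also have "\<dots> \<le> (real N)^2" using N by (simp add: power2_eq_square)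
      finally show ?thesis .
    qed
    have T0: "ereal ((ln (real N) / 2 - C1) / gam N) \<le> mixing_time N \<alpha> (1 - \<epsilon>)"
      by (rule mt_lower[OF a N m eps me NN C10 C1e])
    have CC: "ln (real N) - C \<le> ln (real N) - 2 * C1" unfolding C_def by simp
    show ?thesis
    proof (cases "0 \<le> ln (real N) / 2 - C1")
      case True
      have g0: "0 < gam N" using gam_pos[of N] N by simp
      have gU: "gam N \<le> pi^2 / (2 * (real N)^2)" using gam_upper[of N] N by simp
      have "(real N)\<^sup>2 / pi\<^sup>2 * (ln (real N) - C) \<le> (real N)\<^sup>2 / pi\<^sup>2 * (ln (real N) - 2 * C1)"
        using CC by (intro mult_left_mono) auto
      also have "\<dots> = (ln (real N) / 2 - C1) * (2 * (real N)^2 / pi^2)" by (simp add: field_simps)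
      also have "\<dots> \<le> (ln (real N) / 2 - C1) * (1 / gam N)"
      proof (intro mult_left_mono True)
        have "2 * (real N)^2 / pi^2 = 1 / (pi^2 / (2 * (real N)^2))" by simp
        also have "\<dots> \<le> 1 / gam N" using g0 gU N by (intro divide_left_mono) auto
        finally show "2 * (real N)^2 / pi^2 \<le> 1 / gam N" .
      qed
      also have "\<dots> = (ln (real N) / 2 - C1) / gam N" by simp
      finally show ?thesis using T0 by (meson ereal_less_eq(3) order_trans)
    next
      case False
      then have "ln (real N) - 2 * C1 < 0" by simp
      then have "ln (real N) - C < 0" using CC by simp
      then have "(real N)\<^sup>2 / pi\<^sup>2 * (ln (real N) - C) \<le> 0" by (intro mult_nonneg_nonpos) auto
      then have "ereal ((real N)\<^sup>2 / pi\<^sup>2 * (ln (real N) - C)) \<le> ereal 0" by simp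
    then show ?thesis using mt_nonneg[of N \<alpha> "1 - \<epsilon>"] zero_ereal_def by (metis order_trans)
    qed
  qed
  show ?thesis using C0 main by blast
qed

end
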